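(* Let $N\ge1$ and let $f=|0,\dots,N-1|$, $g=|0,\dots,N-2,N|$, $h=|0,\dots,N-2,N+1|$, $s=|0,\dots,N-3,N-1,N|$ be Casoratians of $\boldsymbol\psi$ (see context), as functions of $(n,m,\beta)$. Then (alternative GD-4 (A-2) bilinear form) $$\widetilde f(p\dot f+\dot g)-(p-b)f\widetilde{\dot f}-(b\widetilde f+\widetilde g)\dot f=0,\qquad \widehat f(q\dot f+\dot g)-(q-b)f\widehat{\dot f}-(b\widehat f+\widehat g)\dot f=0,$$ $$\widetilde f(b^2\dot f-b\dot g+\dot h)+p\widetilde f(\dot g-b\dot f)-(p-b)f(\widetilde{\dot g}-b\widetilde{\dot f})-\dot f\widetilde h=0,$$ $$\widehat f(b^2\dot f-b\dot g+\dot h)+q\widehat f(\dot g-b\dot f)-(q-b)f(\widehat{\dot g}-b\widehat{\dot f})-\dot f\widehat h=0,$$ $$\widetilde f(pg+h)-\widetilde g(pf+g)+f\widetilde s=0,\qquad \widehat f(qg+h)-\widehat g(qf+g)+f\widehat s=0,$$ $$(p-q)(\widetilde f\widehat f-f\widehat{\widetilde f})+\widetilde f\widehat g-\widehat f\widetilde g=0,$$ $$\big[H(p,q)f\widehat{\widetilde{\dot f}}+s\widehat{\widetilde{\dot f}}+(p+q-\alpha_3)g\widehat{\widetilde{\dot f}}-((p+q-\alpha_3)f+g)(\widehat{\widetilde{\dot g}}-b\widehat{\widetilde{\dot f}})+f(\widehat{\widetilde{\dot h}}-b\widehat{\widetilde{\dot g}}+b^2\widehat{\widetilde{\dot f}})\big](p-q)-p_b\widetilde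 f\widehat{\dot f}+q_b\widehat f\widetilde{\dot f}=0.$$
   Context: Fix $\alpha_1,\alpha_2,\alpha_3\in\mathbb C$, $G(\omega,k)=\omega^4-k^4+\alpha_3(\omega^3-k^3)+\alpha_2(\omega^2-k^2)+\alpha_1(\omega-k)$, $H(p,q)=p^2+pq+q^2-\alpha_3(p+q)+\alpha_2$. Let $p,q,a,b\in\mathbb C$ be pairwise distinct, $p_b=G(-p,-b)/(p-b)$, $q_b=G(-q,-b)/(q-b)$. Fix $N\ge1$, $k_1,\dots,k_N\in\mathbb C$; for each $s$ let $\omega_1(k_s),\dots,\omega_4(k_s)$ be the four roots in $\omega$ of $G(-\omega,-k_s)=0$, with $\omega_4(k_s)=k_s$. For constants $\rho^{(0)}_{j,s}$ let $\psi_s(n,m,\alpha,\beta,l)=\sum_{j=1}^4\rho^{(0)}_{j,s}(-\omega_j(k_s))^l(p-\omega_j(k_s))^n(q-\omega_j(k_s))^m(a-\omega_j(k_s))^\alpha(b-\omega_j(k_s))^\beta$ and $\boldsymbol\psi(l)=(\psi_1,\dots,\psi_N)^T$. Casoratian notation: $|l_1,\dots,l_N|=\det(\boldsymbol\psi(l_1),\dots,\boldsymbol\psi(l_N))$; a run "$0,\dots,j$" with $j<0$ is empty, and if the listed indices number more than $N$ the symbol is $0$. Shifts: $\widetilde F=F(n+1,m,\beta)$, $\widehat F=F(n,m+1,\beta)$, $\dot F=F(n,m,\beta+1)$, composed as needed. *)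

theory Defs
  imports Complex_Main "Jordan_Normal_Form.Determinant"
begin

definition G :: "complex \<Rightarrow> complex \<Rightarrow> complex \<Rightarrow> complex \<Rightarrow> complex \<Rightarrow> complex" where
  "G \<alpha>1 \<alpha>2 \<alpha>3 w k = w^4 - k^4 + \<alpha>3 * (w^3 - k^3) + \<alpha>2 * (w^2 - k^2) + \<alpha>1 * (w - k)"

definition H :: "complex \<Rightarrow> complex \<Rightarrow> complex \<Rightarrow> complex \<Rightarrow> complex" where
  "H \<alpha>2 \<alpha>3 p q = p^2 + p*q + q^2 - \<alpha>3 * (p + q) + \<alpha>2"

text \<open>psi s (n,m,alpha,beta,l); omega j s = omega_j(k_s), rho j s = rho^(0)_{j,s}, j in 1..4, s in 1..N.\<close>
definition psi :: "(nat \<Rightarrow> nat \<Rightarrow> complex) \<Rightarrow> (nat \<Rightarrow> nat \<Rightarrow> complex) \<Rightarrow>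
    complex \<Rightarrow> complex \<Rightarrow> complex \<Rightarrow> complex \<Rightarrow> nat \<Rightarrow> int \<Rightarrow> int \<Rightarrow> int \<Rightarrow> int \<Rightarrow> nat \<Rightarrow> complex" where
  "psi \<rho> \<omega> p q a b s n m \<alpha> \<beta> l =
     (\<Sum>j\<in>{1..4}. \<rho> j s * (- \<omega> j s) ^ l * (p - \<omega> j s) powi n * (q - \<omega> j s) powi m
        * (a - \<omega> j s) powi \<alpha> * (b - \<omega> j s) powi \<beta>)"

definition casor :: "nat \<Rightarrow> (nat \<Rightarrow> nat \<Rightarrow> complex) \<Rightarrow> (nat \<Rightarrow> nat \<Rightarrow> complex) \<Rightarrow>
    complex \<Rightarrow> complex \<Rightarrow> complex \<Rightarrow> complex \<Rightarrow> int \<Rightarrow> int \<Rightarrow> int \<Rightarrow> int \<Rightarrow> nat list \<Rightarrow> complex" where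
  "casor N \<rho> \<omega> p q a b n m \<alpha> \<beta> ls =
     (if length ls = N
      then det (mat N N (\<lambda>(i, j). psi \<rho> \<omega> p q a b (i + 1) n m \<alpha> \<beta> (ls ! j)))
      else 0)"

end

theory Submission
  imports Defs
begin


definition Dv :: "nat \<Rightarrow> (nat \<Rightarrow> complex) list \<Rightarrow> complex" where
  "Dv N cs = det (mat N N (\<lambda>(i,j). (cs!j) i))"

lemma Dv_cong:
  assumes "\<And>i j. i < N \<Longrightarrow> j < N \<Longrightarrow> (cs!j) i = (ds!j) i"
  shows "Dv N cs = Dv N ds"
  unfolding Dv_def by (rule arg_cong[where f=det], rule eq_matI, auto simp: assms)

definition cofc :: "nat \<Rightarrow> (nat \<Rightarrow> complex) list \<Rightarrow> nat \<Rightarrow> nat \<Rightarrow> complex" where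
  "cofc N cs k i = cofactor (mat N N (\<lambda>(i,j). (cs!j) i)) i k"

lemma cofc_indep:
  assumes "k < length cs" "k < length ds" "\<And>j. j \<noteq> k \<Longrightarrow> cs!j = ds!j"
  shows "cofc N cs k i = cofc N ds k i"
proof -
  have "mat_delete (mat N N (\<lambda>(i,j). (cs!j) i)) i k = mat_delete (mat N N (\<lambda>(i,j). (ds!j) i)) i k"
    unfolding mat_delete_def by (rule eq_matI) (auto simp: assms)
  thus ?thesis unfolding cofc_def cofactor_def by simp
qed

lemma Dv_col_expand:
  assumes "k < N"
  shows "Dv N cs = (\<Sum>i<N. (cs!k) i * cofc N cs k i)"
  unfolding Dv_def cofc_def
  by (subst laplace_expansion_column[OF _ assms]) (auto intro!: sum.cong simp: assms)

lemma Dv_update_expand: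
  assumes "k < N" "k < length cs"
  shows "Dv N (cs[k := v]) = (\<Sum>i<N. v i * cofc N cs k i)"
proof -
  have "Dv N (cs[k := v]) = (\<Sum>i<N. (cs[k:=v]!k) i * cofc N (cs[k:=v]) k i)"
    by (rule Dv_col_expand[OF assms(1)])
  also have "\<dots> = (\<Sum>i<N. v i * cofc N cs k i)"
    by (rule sum.cong, simp, subst cofc_indep[of k "cs[k:=v]" cs], use assms in auto)
  finally show ?thesis .
qed

lemma Dv_linear_col:
  assumes "k < N" "k < length cs"
  shows "Dv N (cs[k := (\<lambda>i. x * u i + y * v i)]) = x * Dv N (cs[k:=u]) + y * Dv N (cs[k:=v])"
  unfolding Dv_update_expand[OF assms]
  by (simp add: sum_distrib_left sum.distrib algebra_simps)

lemma Dv_sum_col: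
  assumes "k < N" "k < length cs" "finite T"
  shows "Dv N (cs[k := (\<lambda>i. \<Sum>t\<in>T. c t * u t i)]) = (\<Sum>t\<in>T. c t * Dv N (cs[k:=u t]))"
  unfolding Dv_update_expand[OF assms(1,2)]
  by (simp add: sum_distrib_left sum_distrib_right mult.assoc sum.swap[of _ T])

lemma Dv_repeated:
  assumes "j1 < N" "j2 < N" "j1 \<noteq> j2" "\<And>i. i < N \<Longrightarrow> (cs!j1) i = (cs!j2) i"
  shows "Dv N cs = 0"
  unfolding Dv_def
  by (rule det_identical_columns[OF _ assms(3,1,2)], auto intro!: eq_vecI simp: assms col_def)

lemma Dv_bilinear_two:
  assumes "i < N" "j < N" "i \<noteq> j" "length cs = N"
  shows "Dv N (cs[i := (\<lambda>r. u r + v r), j := (\<lambda>r. u r + v r)]) =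
     Dv N (cs[i := u, j := u]) + Dv N (cs[i := u, j := v]) + Dv N (cs[i := v, j := u]) + Dv N (cs[i := v, j := v])"
proof -
  have e1: "\<And>x y. cs[i := x, j := y] = (cs[j := y])[i := x]"
    using assms(3) by (simp add: list_update_swap)
  have lin_i: "\<And>y. Dv N ((cs[j := y])[i := (\<lambda>r. 1 * u r + 1 * v r)]) = 1 * Dv N ((cs[j:=y])[i:=u]) + 1 * Dv N ((cs[j:=y])[i:=v])"
    by (rule Dv_linear_col, use assms in auto)
  have lin_j: "\<And>x. Dv N ((cs[i := x])[j := (\<lambda>r. 1 * u r + 1 * v r)]) = 1 * Dv N ((cs[i:=x])[j:=u]) + 1 * Dv N ((cs[i:=x])[j:=v])"
    by (rule Dv_linear_col, use assms in auto)
  show ?thesis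
    using lin_i lin_j by (simp add: e1 list_update_swap[OF assms(3)])
qed

lemma Dv_swap:
  assumes "i < N" "j < N" "i \<noteq> j" "length cs = N"
  shows "Dv N (cs[i := cs!j, j := cs!i]) = - Dv N cs"
proof -
  let ?u = "cs!i" and ?v = "cs!j"
  have b: "Dv N (cs[i := (\<lambda>r. ?u r + ?v r), j := (\<lambda>r. ?u r + ?v r)]) =
     Dv N (cs[i := ?u, j := ?u]) + Dv N (cs[i := ?u, j := ?v]) + Dv N (cs[i := ?v, j := ?u]) + Dv N (cs[i := ?v, j := ?v])"
    by (rule Dv_bilinear_two[OF assms])
  have z1: "Dv N (cs[i := (\<lambda>r. ?u r + ?v r), j := (\<lambda>r. ?u r + ?v r)]) = 0"
    by (rule Dv_repeated[OF assms(1,2,3)], use assms in auto)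
  have z2: "Dv N (cs[i := ?u, j := ?u]) = 0"
    by (rule Dv_repeated[OF assms(1,2,3)], use assms in auto)
  have z3: "Dv N (cs[i := ?v, j := ?v]) = 0"
    by (rule Dv_repeated[OF assms(1,2,3)], use assms in auto)
  have id: "cs[i := ?u, j := ?v] = cs" by simp
  have "Dv N (cs[i := ?u, j := ?v]) + Dv N (cs[i := ?v, j := ?u]) = 0"
    using b unfolding z1 z2 z3 by simp
  thus ?thesis unfolding id by (simp add: eq_neg_iff_add_eq_0 add.commute)
qed

lemma Dv_swap_adj:
  assumes "length L + 2 + length R = N"
  shows "Dv N (L @ [x, y] @ R) = - Dv N (L @ [y, x] @ R)"
proof -
  let ?cs = "L @ [y, x] @ R"
  have "Dv N (?cs[length L := ?cs ! Suc (length L), Suc (length L) := ?cs ! length L]) = - Dv N ?cs"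
    by (rule Dv_swap, use assms in auto)
  moreover have "?cs[length L := ?cs ! Suc (length L), Suc (length L) := ?cs ! length L] = L @ [x, y] @ R"
    by (simp add: list_update_append nth_append)
  ultimately show ?thesis by simp
qed

lemma Dv_move_end:
  assumes "length L + 1 + length R = N"
  shows "Dv N (L @ [x] @ R) = (-1) ^ length R * Dv N (L @ R @ [x])"
  using assms
proof (induction R arbitrary: L)
  case Nil thus ?case by simp
next
  case (Cons r R)
  have "Dv N (L @ [x] @ r # R) = Dv N (L @ [x, r] @ R)" by simp
  also have "\<dots> = - Dv N (L @ [r, x] @ R)"
    by (rule Dv_swap_adj, use Cons.prems in auto)
  also have "L @ [r, x] @ R = (L @ [r]) @ [x] @ R" by simp
  also have "Dv N \<dots> = (-1) ^ length R * Dv N ((L @ [r]) @ R @ [x])"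
    by (rule Cons.IH, use Cons.prems in auto)
  finally show ?case by simp
qed

lemma Dv_unitri:
  assumes len: "length cs = N" "length ds = N"
    and rel: "\<And>i j. i < N \<Longrightarrow> j < N \<Longrightarrow> (ds!j) i = (cs!j) i + (\<Sum>t<j. U t j * (cs!t) i)"
  shows "Dv N ds = Dv N cs"
proof -
  let ?A = "mat N N (\<lambda>(i,j). (cs!j) i)"
  let ?Um = "mat N N (\<lambda>(t,j). if t = j then 1 else if t < j then U t j else (0::complex))"
  have prod: "mat N N (\<lambda>(i,j). (ds!j) i) = ?A * ?Um"
  proof (rule eq_matI)
    fix i j assume ij: "i < dim_row (?A * ?Um)" "j < dim_col (?A * ?Um)"
    hence i: "i < N" and j: "j < N" by auto
    have "(?A * ?Um) $$ (i,j) = (\<Sum>t<N. (cs!t) i * ?Um $$ (t,j))"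
      using i j by (simp add: scalar_prod_def atLeast0LessThan)
    also have "\<dots> = (\<Sum>t<N. (cs!t) i * (if t = j then 1 else if t < j then U t j else 0))"
      by (rule sum.cong, auto simp: j)
    also have "\<dots> = (\<Sum>t<N. (if t = j then (cs!t) i else 0) + (if t < j then U t j * (cs!t) i else 0))"
      by (rule sum.cong, auto)
    also have "\<dots> = (cs!j) i + (\<Sum>t<N. if t < j then U t j * (cs!t) i else 0)"
      by (simp add: sum.distrib j)
    also have "(\<Sum>t<N. if t < j then U t j * (cs!t) i else 0) = (\<Sum>t<j. U t j * (cs!t) i)"
    proof -
      have "(\<Sum>t<N. if t < j then U t j * (cs!t) i else 0) = (\<Sum>t\<in>{..<N} \<inter> {t. t < j}. U t j * (cs!t) i)"
        by (simp add: sum.If_cases)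
      also have "{..<N} \<inter> {t. t < j} = {..<j}" using j by auto
      finally show ?thesis .
    qed
    finally show "mat N N (\<lambda>(i,j). (ds!j) i) $$ (i,j) = (?A * ?Um) $$ (i,j)"
      using i j rel by simp
  qed auto
  have "det ?Um = 1"
  proof -
    have "upper_triangular ?Um" unfolding upper_triangular_def by auto
    hence "det ?Um = prod_list (diag_mat ?Um)" by (rule det_upper_triangular) auto
    also have "diag_mat ?Um = replicate N 1"
      by (rule nth_equalityI, auto simp: diag_mat_def)
    finally show ?thesis by simp
  qed
  thus ?thesis unfolding Dv_def prod by (subst det_mult[of _ N]) auto
qed

definition del :: "nat \<Rightarrow> 'a list \<Rightarrow> 'a list" where
  "del j xs = take j xs @ drop (Suc j) xs"

lemma del_nth: "j < length xs \<Longrightarrow> i < length xs - 1 \<Longrightarrow> del j xs ! i = xs ! (if i < j then i else Suc i)"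
  unfolding del_def by (auto simp: nth_append min_def)

lemma length_del[simp]: "j < length xs \<Longrightarrow> length (del j xs) = length xs - 1"
  unfolding del_def by auto

lemma Dv_cramer:
  assumes len: "length cs = Suc N" and r: "r < N"
  shows "(\<Sum>j<Suc N. (-1)^j * Dv N (del j cs) * (cs!j) r) = 0"
proof -
  let ?A = "mat (Suc N) (Suc N) (\<lambda>(i,j). if i = 0 then (cs!j) r else (cs!j) (i - 1))"
  have A: "?A \<in> carrier_mat (Suc N) (Suc N)" by auto
  have "det ?A = 0"
    by (rule det_identical_rows[OF A, of 0 "Suc r"], use r in \<open>auto intro!: eq_vecI\<close>)
  moreover have "det ?A = (\<Sum>j<Suc N. ?A $$ (0,j) * cofactor ?A 0 j)"
    by (rule laplace_expansion_row[OF A], simp)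
  moreover have "(\<Sum>j<Suc N. ?A $$ (0,j) * cofactor ?A 0 j) = (\<Sum>j<Suc N. (-1)^j * Dv N (del j cs) * (cs!j) r)"
  proof (rule sum.cong, simp)
    fix j assume "j \<in> {..<Suc N}" hence j: "j < Suc N" by simp
    have "mat_delete ?A 0 j = mat N N (\<lambda>(i,jj). (del j cs ! jj) i)"
      unfolding mat_delete_def using j len by (intro eq_matI) (auto simp: del_nth)
    thus "?A $$ (0,j) * cofactor ?A 0 j = (-1)^j * Dv N (del j cs) * (cs!j) r"
      unfolding cofactor_def Dv_def using j by simp
  qed
  ultimately show ?thesis by simp
qed

lemma Dv_plucker:
  assumes lx: "length X + 1 = N" and ly: "length Y = Suc N"
  shows "(\<Sum>j<Suc N. (-1)^j * Dv N (del j Y) * Dv N (X @ [Y!j])) = 0"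
proof -
  let ?k = "length X"
  have k: "?k < N" using lx by simp
  have ex: "\<And>v. Dv N (X @ [v]) = (\<Sum>r<N. v r * cofc N (X @ [\<lambda>_. 0]) ?k r)"
  proof -
    fix v
    have "X @ [v] = (X @ [\<lambda>_. 0])[?k := v]" by simp
    thus "Dv N (X @ [v]) = (\<Sum>r<N. v r * cofc N (X @ [\<lambda>_. 0]) ?k r)"
      using Dv_update_expand[OF k, of "X @ [\<lambda>_. 0]" v] by simp
  qed
  have "(\<Sum>j<Suc N. (-1)^j * Dv N (del j Y) * Dv N (X @ [Y!j]))
      = (\<Sum>j<Suc N. \<Sum>r<N. cofc N (X @ [\<lambda>_. 0]) ?k r * ((-1)^j * Dv N (del j Y) * (Y!j) r))"
    unfolding ex by (simp add: sum_distrib_left mult_ac)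
  also have "\<dots> = (\<Sum>r<N. \<Sum>j<Suc N. cofc N (X @ [\<lambda>_. 0]) ?k r * ((-1)^j * Dv N (del j Y) * (Y!j) r))"
    by (rule sum.swap)
  also have "\<dots> = (\<Sum>r<N. cofc N (X @ [\<lambda>_. 0]) ?k r * (\<Sum>j<Suc N. (-1)^j * Dv N (del j Y) * (Y!j) r))"
    by (simp only: sum_distrib_left)
  also have "\<dots> = 0"
    by (rule sum.neutral, auto simp del: sum.lessThan_Suc simp: Dv_cramer[OF ly])
  finally show ?thesis .
qed

lemma Dv_rowscale:
  assumes len: "length cs = N"
  shows "Dv N (map (\<lambda>v i. d i * v i) cs) = (\<Prod>i<N. d i) * Dv N cs"
proof -
  let ?A = "mat N N (\<lambda>(i,j). (cs!j) i)"
  let ?Dm = "mat N N (\<lambda>(i,j). if i = j then d i else (0::complex))"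
  have prod: "mat N N (\<lambda>(i,j). (map (\<lambda>v i. d i * v i) cs ! j) i) = ?Dm * ?A"
  proof (rule eq_matI)
    fix i j assume "i < dim_row (?Dm * ?A)" "j < dim_col (?Dm * ?A)"
    hence i: "i < N" and j: "j < N" by auto
    have "(?Dm * ?A) $$ (i,j) = (\<Sum>t<N. ?Dm $$ (i,t) * (cs!j) t)"
      using i j by (simp add: scalar_prod_def atLeast0LessThan)
    also have "\<dots> = (\<Sum>t<N. if t = i then d i * (cs!j) t else 0)"
      by (rule sum.cong, auto simp: i)
    also have "\<dots> = d i * (cs!j) i" using i by simp
    finally show "mat N N (\<lambda>(i,j). (map (\<lambda>v i. d i * v i) cs ! j) i) $$ (i,j) = (?Dm * ?A) $$ (i,j)"
      using i j len by simp
  qed auto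
  have "det ?Dm = (\<Prod>i<N. d i)"
  proof -
    have "upper_triangular ?Dm" unfolding upper_triangular_def by auto
    hence "det ?Dm = prod_list (diag_mat ?Dm)" by (rule det_upper_triangular) auto
    also have "diag_mat ?Dm = map d [0..<N]"
      by (rule nth_equalityI, auto simp: diag_mat_def)
    also have "prod_list (map d [0..<N]) = (\<Prod>i<N. d i)"
      by (induction N) (auto simp: mult.commute)
    finally show ?thesis .
  qed
  thus ?thesis unfolding Dv_def prod by (subst det_mult[of _ N]) auto
qed

lemma Dv_lastrow:
  assumes len: "length cs = Suc N"
    and z: "\<And>j. 0 < j \<Longrightarrow> j \<le> N \<Longrightarrow> (cs!j) N = 0"
  shows "Dv (Suc N) cs = (-1)^N * (cs!0) N * Dv N (tl cs)"
proof -
  let ?A = "mat (Suc N) (Suc N) (\<lambda>(i,j). (cs!j) i)"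
  have A: "?A \<in> carrier_mat (Suc N) (Suc N)" by auto
  have "det ?A = (\<Sum>j<Suc N. ?A $$ (N,j) * cofactor ?A N j)"
    by (rule laplace_expansion_row[OF A], simp)
  also have "\<dots> = ?A $$ (N,0) * cofactor ?A N 0 + (\<Sum>j<N. ?A $$ (N,Suc j) * cofactor ?A N (Suc j))"
    by (subst sum.lessThan_Suc_shift, simp)
  also have "(\<Sum>j<N. ?A $$ (N,Suc j) * cofactor ?A N (Suc j)) = 0"
    by (rule sum.neutral, auto simp: z)
  also have "mat_delete ?A N 0 = mat N N (\<lambda>(i,j). (tl cs ! j) i)"
    unfolding mat_delete_def using len by (intro eq_matI) (auto simp: nth_tl)
  hence "cofactor ?A N 0 = (-1)^N * Dv N (tl cs)"
    unfolding cofactor_def Dv_def by simp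
  finally show ?thesis unfolding Dv_def by simp
qed


definition ev :: "(nat \<Rightarrow> nat \<Rightarrow> complex) \<Rightarrow> complex poly \<Rightarrow> nat \<Rightarrow> complex" where
  "ev w P = (\<lambda>i. \<Sum>k\<le>degree P. coeff P k * w k i)"

lemma ev_bound:
  assumes "degree P < K"
  shows "ev w P i = (\<Sum>k<K. coeff P k * w k i)"
proof -
  have "(\<Sum>k<K. coeff P k * w k i) = (\<Sum>k\<le>degree P. coeff P k * w k i)"
  proof (rule sum.mono_neutral_right)
    show "\<forall>k\<in>{..<K} - {..degree P}. coeff P k * w k i = 0"
      by (auto simp: coeff_eq_0)
  qed (use assms in auto)
  thus ?thesis unfolding ev_def by simp
qed

lemma ev_add: "ev w (P + R) i = ev w P i + ev w R i"
proof -
  let ?K = "Suc (max (degree P) (degree R))"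
  have d: "degree (P + R) < ?K" using degree_add_le_max[of P R] by linarith
  have dP: "degree P < ?K" and dR: "degree R < ?K" by auto
  show ?thesis
    unfolding ev_bound[OF d] ev_bound[OF dP] ev_bound[OF dR]
    by (auto simp: sum.distrib algebra_simps)
qed

lemma ev_smult: "ev w (smult c P) i = c * ev w P i"
proof -
  have d: "degree (smult c P) < Suc (degree P)" by (simp add: le_imp_less_Suc)
  have dP: "degree P < Suc (degree P)" by simp
  show ?thesis unfolding ev_bound[OF d] ev_bound[OF dP]
    by (simp add: sum_distrib_left mult.assoc del: sum.lessThan_Suc)
qed

lemma ev_zero[simp]: "ev w 0 i = 0" by (simp add: ev_def)

lemma ev_uminus: "ev w (- P) i = - ev w P i"
  using ev_smult[of w "-1" P i] by simp

lemma ev_diff: "ev w (P - R) i = ev w P i - ev w R i"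
  using ev_add[of w P "-R" i] ev_uminus[of w R i] by simp

lemma ev_monom: "ev w (monom c k) i = c * w k i"
proof -
  have d: "degree (monom c k) < Suc k" by (simp add: degree_monom_le le_imp_less_Suc)
  show ?thesis unfolding ev_bound[OF d]
    by (simp add: coeff_monom if_distrib cong: if_cong)
qed

lemma ev_sum: "finite T \<Longrightarrow> ev w (\<Sum>t\<in>T. P t) i = (\<Sum>t\<in>T. ev w (P t) i)"
  by (induction T rule: finite_induct) (auto simp: ev_add)

lemma poly_monom_sum:
  assumes "degree P < K"
  shows "P = (\<Sum>t<K. monom (coeff P t) t)"
proof -
  have "P = (\<Sum>t\<le>degree P. monom (coeff P t) t)" by (rule poly_as_sum_of_monoms[symmetric])
  also have "\<dots> = (\<Sum>t<K. monom (coeff P t) t)"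
    by (rule sum.mono_neutral_left, use assms in \<open>auto simp: coeff_eq_0\<close>)
  finally show ?thesis .
qed

lemma mult_monom_smult: "(R::complex poly) * monom c t = smult c (R * monom 1 t)"
proof -
  have "monom c t = smult c (monom 1 t)" by (simp add: smult_monom)
  thus ?thesis by (simp only: mult_smult_right)
qed

lemma ev_mult_expand:
  assumes "degree P < K"
  shows "ev w (R * P) i = (\<Sum>t<K. coeff P t * ev w (R * monom 1 t) i)"
proof -
  have "R * P = R * (\<Sum>t<K. monom (coeff P t) t)"
    by (subst poly_monom_sum[OF assms], simp)
  also have "\<dots> = (\<Sum>t<K. smult (coeff P t) (R * monom 1 t))"
    unfolding sum_distrib_left by (rule sum.cong[OF refl], rule mult_monom_smult)
  finally have "R * P = (\<Sum>t<K. smult (coeff P t) (R * monom 1 t))" .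
  thus ?thesis by (simp add: ev_sum ev_smult)
qed

lemma ev_shift: "ev (\<lambda>l. ev w (R * monom 1 l)) P i = ev w (R * P) i"
proof -
  have d: "degree P < Suc (degree P)" by simp
  show ?thesis unfolding ev_bound[OF d] ev_mult_expand[OF d] by simp
qed

definition Om :: "nat \<Rightarrow> (nat \<Rightarrow> nat \<Rightarrow> complex) \<Rightarrow> complex poly list \<Rightarrow> complex" where
  "Om N w Ps = Dv N (map (ev w) Ps)"

definition Cas :: "nat \<Rightarrow> (nat \<Rightarrow> nat \<Rightarrow> complex) \<Rightarrow> complex poly \<Rightarrow> nat list \<Rightarrow> complex" where
  "Cas N w D ls = (if length ls = N then Om N w (map (\<lambda>l. monom 1 l * D) ls) else 0)"

lemma Om_shift: "length Ps = N \<Longrightarrow> Om N (\<lambda>l. ev w (R * monom 1 l)) Ps = Om N w (map (\<lambda>P. R * P) Ps)"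
  unfolding Om_def by (rule Dv_cong) (simp add: ev_shift)


lemma Om_unitri:
  assumes len: "length Ps = N" "length Qs = N"
    and rel: "\<And>j. j < N \<Longrightarrow> Qs!j = Ps!j + (\<Sum>t<j. smult (U t j) (Ps!t))"
  shows "Om N w Qs = Om N w Ps"
  unfolding Om_def
  by (rule Dv_unitri[where U=U], use len in simp, use len in simp,
      simp add: len rel ev_add ev_sum ev_smult)

lemma Om_chain:
  assumes m: "\<And>k. k < K \<Longrightarrow> degree (m k) = k \<and> coeff (m k) k = 1"
    and len: "K + length B = N"
  shows "Om N w (map (\<lambda>k. R * m k) [0..<K] @ B) = Om N w (map (\<lambda>k. R * monom 1 k) [0..<K] @ B)"
proof (rule Om_unitri[where U="\<lambda>t j. if j < K then coeff (m j) t else 0"])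
  fix j assume j: "j < N"
  show "(map (\<lambda>k. R * m k) [0..<K] @ B) ! j = (map (\<lambda>k. R * monom 1 k) [0..<K] @ B) ! j +
      (\<Sum>t<j. smult (if j < K then coeff (m j) t else 0) ((map (\<lambda>k. R * monom 1 k) [0..<K] @ B) ! t))"
  proof (cases "j < K")
    case True
    have dm: "degree (m j) < Suc j" using m[OF True] by simp
    have "R * m j = R * (\<Sum>t<Suc j. monom (coeff (m j) t) t)"
      by (subst poly_monom_sum[OF dm], simp)
    also have "\<dots> = (\<Sum>t<Suc j. smult (coeff (m j) t) (R * monom 1 t))"
      unfolding sum_distrib_left by (rule sum.cong[OF refl], rule mult_monom_smult)
    also have "\<dots> = R * monom 1 j + (\<Sum>t<j. smult (coeff (m j) t) (R * monom 1 t))"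
      using m[OF True] by (simp add: add.commute)
    finally have e: "R * m j = R * monom 1 j + (\<Sum>t<j. smult (coeff (m j) t) (R * monom 1 t))" .
    have e1: "(map (\<lambda>k. R * m k) [0..<K] @ B) ! j = R * m j" using True by (simp add: nth_append)
    have e2: "(map (\<lambda>k. R * monom 1 k) [0..<K] @ B) ! j = R * monom 1 j" using True by (simp add: nth_append)
    have e3: "(\<Sum>t<j. smult (if j < K then coeff (m j) t else 0) ((map (\<lambda>k. R * monom 1 k) [0..<K] @ B) ! t))
       = (\<Sum>t<j. smult (coeff (m j) t) (R * monom 1 t))"
      by (rule sum.cong) (use True in \<open>auto simp: nth_append\<close>)
    show ?thesis unfolding e1 e2 e3 e ..
  next
    case False thus ?thesis by (simp add: nth_append)
  qed
qed (use len in auto)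

lemma Om_span:
  assumes dr: "degree r < K" and len: "K + 1 + length B = N"
  shows "Om N w (map (\<lambda>k. R * monom 1 k) [0..<K] @ [y + R * r] @ B) = Om N w (map (\<lambda>k. R * monom 1 k) [0..<K] @ [y] @ B)"
proof (rule Om_unitri[where U="\<lambda>t j. if j = K then coeff r t else 0"])
  fix j assume j: "j < N"
  let ?Ps = "map (\<lambda>k. R * monom 1 k) [0..<K] @ [y] @ B"
  show "(map (\<lambda>k. R * monom 1 k) [0..<K] @ [y + R * r] @ B) ! j = ?Ps ! j +
      (\<Sum>t<j. smult (if j = K then coeff r t else 0) (?Ps ! t))"
  proof (cases "j = K")
    case True
    have "R * r = R * (\<Sum>t<K. monom (coeff r t) t)"
      by (subst poly_monom_sum[OF dr], simp)
    also have "\<dots> = (\<Sum>t<K. smult (coeff r t) (R * monom 1 t))"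
      unfolding sum_distrib_left by (rule sum.cong[OF refl], rule mult_monom_smult)
    also have "\<dots> = (\<Sum>t<K. smult (coeff r t) (?Ps ! t))"
      by (rule sum.cong, auto simp: nth_append)
    finally show ?thesis using True by (simp add: nth_append)
  next
    case False thus ?thesis by (cases "j < K") (auto simp: nth_append)
  qed
qed (use len in auto)


lemma map_ev_append: "map (ev w) (A @ [X] @ B) = (map (ev w) (A @ [P] @ B))[length A := ev w X]"
  by (simp add: list_update_append)

lemma Om_lin:
  assumes "length A + 1 + length B = N"
  shows "Om N w (A @ [P + smult c R] @ B) = Om N w (A @ [P] @ B) + c * Om N w (A @ [R] @ B)"
proof -
  have e: "ev w (P + smult c R) = (\<lambda>i. 1 * ev w P i + c * ev w R i)"
    by (rule ext) (simp add: ev_add ev_smult)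
  have k: "length A < N" "length A < length (map (ev w) (A @ [P] @ B))" using assms by auto
  show ?thesis unfolding Om_def
    apply (subst map_ev_append[of w A _ B P])
    apply (subst e)
    apply (subst Dv_linear_col[OF k])
    apply (subst (2) map_ev_append[of w A _ B P], subst (3) map_ev_append[of w A _ B P])
    by (simp add: list_update_append)
qed

lemma Om_add:
  assumes "length A + 1 + length B = N"
  shows "Om N w (A @ [P + R] @ B) = Om N w (A @ [P] @ B) + Om N w (A @ [R] @ B)"
  using Om_lin[OF assms, of w P 1 R] by simp

lemma Om_zero:
  assumes "length A + 1 + length B = N"
  shows "Om N w (A @ [0] @ B) = 0"
  using Om_lin[OF assms, of w 0 1 0] by simp

lemma Om_smult:
  assumes "length A + 1 + length B = N"
  shows "Om N w (A @ [smult c R] @ B) = c * Om N w (A @ [R] @ B)"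
  using Om_lin[OF assms, of w 0 c R] Om_zero[OF assms, of w] by simp

lemma Om_diff:
  assumes "length A + 1 + length B = N"
  shows "Om N w (A @ [P - R] @ B) = Om N w (A @ [P] @ B) - Om N w (A @ [R] @ B)"
  using Om_lin[OF assms, of w P "-1" R] by simp

lemma Om_rep:
  assumes "length A + 1 + length B = N" "x \<in> set A \<or> x \<in> set B"
  shows "Om N w (A @ [x] @ B) = 0"
proof -
  let ?cs = "map (ev w) (A @ [x] @ B)"
  from assms(2) obtain j where j: "j < length (A @ [x] @ B)" "j \<noteq> length A" "(A @ [x] @ B) ! j = x"
  proof
    assume "x \<in> set A"
    then obtain j where "j < length A" "A ! j = x" by (auto simp: in_set_conv_nth)
    thus ?thesis using that[of j] by (auto simp: nth_append)
  next
    assume "x \<in> set B"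
    then obtain j where "j < length B" "B ! j = x" by (auto simp: in_set_conv_nth)
    thus ?thesis using that[of "length A + 1 + j"] by (auto simp: nth_append)
  qed
  show ?thesis unfolding Om_def
    by (rule Dv_repeated[of j N "length A"], use assms j in \<open>auto simp: nth_append\<close>)
qed

lemma Om_move_end:
  assumes "length A + 1 + length B = N"
  shows "Om N w (A @ [x] @ B) = (-1) ^ length B * Om N w (A @ B @ [x])"
  unfolding Om_def using Dv_move_end[of "map (ev w) A" "map (ev w) B" N "ev w x"] assms by simp

lemma Om_plucker:
  assumes "length X + 1 = N" "length Y = Suc N"
  shows "(\<Sum>j<Suc N. (-1)^j * Om N w (del j Y) * Om N w (X @ [Y!j])) = 0"
proof -
  have "\<And>j. j < Suc N \<Longrightarrow> map (ev w) (del j Y) = del j (map (ev w) Y)"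
    unfolding del_def by (simp add: take_map drop_map)
  hence "(\<Sum>j<Suc N. (-1)^j * Om N w (del j Y) * Om N w (X @ [Y!j])) =
     (\<Sum>j<Suc N. (-1)^j * Dv N (del j (map (ev w) Y)) * Dv N (map (ev w) X @ [map (ev w) Y ! j]))"
    unfolding Om_def using assms by (intro sum.cong) auto
  also have "\<dots> = 0" by (rule Dv_plucker, use assms in auto)
  finally show ?thesis .
qed

lemma del_append1: "j < length A \<Longrightarrow> del j (A @ B) = del j A @ B"
  unfolding del_def by auto
lemma del_append2: "length A \<le> j \<Longrightarrow> del j (A @ B) = A @ del (j - length A) B"
  unfolding del_def by (auto simp: Suc_diff_le)

lemma Om_plucker_split:
  assumes lx: "length C + length M + 1 = N" and ly: "length A + length M + length B = Suc N"
  shows "(\<Sum>j<length A. (-1)^j * Om N w (del j A @ M @ B) * Om N w (C @ M @ [A!j]))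
       + (\<Sum>j<length B. (-1)^(length A + length M + j) * Om N w (A @ M @ del j B) * Om N w (C @ M @ [B!j])) = 0"
proof -
  let ?Y = "A @ M @ B" and ?X = "C @ M"
  let ?F = "\<lambda>j. (-1)^j * Om N w (del j ?Y) * Om N w (?X @ [?Y!j])"
  have P: "(\<Sum>j<Suc N. ?F j) = 0" by (rule Om_plucker, use lx ly in auto)
  have split: "{..<Suc N} = {..<length A} \<union> ({length A..<length A + length M} \<union> {length A + length M..<Suc N})"
    using ly by auto
  have "(\<Sum>j<Suc N. ?F j) = (\<Sum>j<length A. ?F j) + ((\<Sum>j\<in>{length A..<length A + length M}. ?F j) + (\<Sum>j\<in>{length A + length M..<Suc N}. ?F j))"
    unfolding split by (subst sum.union_disjoint, auto, subst sum.union_disjoint, auto)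
  moreover have "(\<Sum>j\<in>{length A..<length A + length M}. ?F j) = 0"
  proof (rule sum.neutral, intro ballI)
    fix j assume "j \<in> {length A..<length A + length M}"
    hence j: "length A \<le> j" "j < length A + length M" by auto
    have "?Y ! j = (M @ B) ! (j - length A)" by (rule nth_append_right[OF j(1)])
    also have "\<dots> = M ! (j - length A)" by (rule nth_append_left, use j in simp)
    finally have yj: "?Y ! j = M ! (j - length A)" .
    have "M ! (j - length A) \<in> set M" using j by auto
    hence "Om N w (?X @ [?Y!j]) = 0"
      using Om_rep[of "?X" "[]" N "?Y ! j" w] lx yj by auto
    thus "?F j = 0" by simp
  qed
  moreover have "(\<Sum>j<length A. ?F j) = (\<Sum>j<length A. (-1)^j * Om N w (del j A @ M @ B) * Om N w (C @ M @ [A!j]))"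
    by (rule sum.cong, auto simp: del_append1 nth_append)
  moreover have "(\<Sum>j\<in>{length A + length M..<Suc N}. ?F j) =
      (\<Sum>j<length B. (-1)^(length A + length M + j) * Om N w (A @ M @ del j B) * Om N w (C @ M @ [B!j]))"
  proof -
    have l2: "length B + (length A + length M) = Suc N" using ly by simp
    have e: "{length A + length M..<Suc N} = {0 + (length A + length M)..<length B + (length A + length M)}"
      unfolding l2 by simp
    have "(\<Sum>j\<in>{length A + length M..<Suc N}. ?F j) = (\<Sum>j\<in>{0..<length B}. ?F (j + (length A + length M)))"
      by (simp only: e sum.shift_bounds_nat_ivl)
    also have "\<dots> = (\<Sum>j<length B. (-1)^(length A + length M + j) * Om N w (A @ M @ del j B) * Om N w (C @ M @ [B!j]))"
      by (rule sum.cong, auto simp: del_append2 nth_append add.commute)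
    finally show ?thesis .
  qed
  ultimately show ?thesis using P by simp
qed

definition mon :: "complex poly \<Rightarrow> nat \<Rightarrow> bool" where
  "mon P k \<longleftrightarrow> degree P = k \<and> coeff P k = 1"

lemma mon_monom: "mon (monom 1 k) k"
  unfolding mon_def by (simp add: degree_monom_eq)

lemma mon_one: "mon 1 0" unfolding mon_def by simp

lemma mon_lin: "mon [:u, 1:] 1" unfolding mon_def by simp

lemma mon_mult:
  assumes "mon P a" "mon Q b" shows "mon (P * Q) (a + b)"
proof -
  have c: "coeff (P * Q) (a + b) = 1"
    using coeff_mult_degree_sum[of P Q] assms unfolding mon_def by simp
  have "degree (P * Q) \<le> a + b" using degree_mult_le[of P Q] assms unfolding mon_def by simp
  moreover have "degree (P * Q) \<ge> a + b" using c by (metis le_degree zero_neq_one)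
  ultimately show ?thesis unfolding mon_def using c by simp
qed

lemma map_upt_shift: "map f [j..<K] = map (\<lambda>k. f (k + j)) [0..<K - j]"
proof (rule nth_equalityI)
  fix i assume "i < length (map f [j..<K])"
  thus "map f [j..<K] ! i = map (\<lambda>k. f (k + j)) [0..<K - j] ! i" by (simp add: add.commute)
qed simp

lemma Om_chainE:
  assumes lc: "length Cs = j" and jK: "j \<le> K" and mc: "\<And>i. i < j \<Longrightarrow> mon (Cs!i) i"
    and mE: "mon E j" and len: "K + length B = N"
  shows "Om N w (map (\<lambda>k. D * monom 1 k) [0..<K] @ B) =
         Om N w (map (\<lambda>c. D * c) Cs @ map (\<lambda>k. (D * E) * monom 1 k) [0..<K - j] @ B)"
proof -
  define m where "m = (\<lambda>k. if k < j then Cs!k else E * monom 1 (k - j))"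
  have m: "\<And>k. k < K \<Longrightarrow> degree (m k) = k \<and> coeff (m k) k = 1"
  proof -
    fix k assume "k < K"
    show "degree (m k) = k \<and> coeff (m k) k = 1"
    proof (cases "k < j")
      case True
      hence "m k = Cs ! k" unfolding m_def by simp
      thus ?thesis using mc[OF True] unfolding mon_def by simp
    next
      case False
      hence mk: "m k = E * monom 1 (k - j)" unfolding m_def by simp
      have "mon (E * monom 1 (k - j)) (j + (k - j))" by (rule mon_mult[OF mE mon_monom])
      hence "mon (m k) k" using False mk by simp
      thus ?thesis unfolding mon_def .
    qed
  qed
  have A: "Om N w (map (\<lambda>k. D * m k) [0..<K] @ B) = Om N w (map (\<lambda>k. D * monom 1 k) [0..<K] @ B)"
    by (rule Om_chain[OF m len])
  have sp: "[0..<K] = [0..<j] @ [j..<K]" using upt_add_eq_append[of 0 j "K-j"] jK by simp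
  have B1: "map (\<lambda>k. D * m k) [0..<j] = map (\<lambda>c. D * c) Cs"
  proof (rule nth_equalityI)
    show "length (map (\<lambda>k. D * m k) [0..<j]) = length (map (\<lambda>c. D * c) Cs)" using lc by simp
  next
    fix i assume "i < length (map (\<lambda>k. D * m k) [0..<j])"
    hence i: "i < j" by simp
    show "map (\<lambda>k. D * m k) [0..<j] ! i = map (\<lambda>c. D * c) Cs ! i"
      using i lc by (simp add: m_def)
  qed
  have B2: "map (\<lambda>k. D * m k) [j..<K] = map (\<lambda>k. (D * E) * monom 1 k) [0..<K - j]"
  proof -
    have "map (\<lambda>k. D * m k) [j..<K] = map (\<lambda>k. D * m (k + j)) [0..<K - j]" by (rule map_upt_shift)
    also have "\<dots> = map (\<lambda>k. (D * E) * monom 1 k) [0..<K - j]"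
      by (rule map_cong[OF refl]) (simp add: m_def mult.assoc)
    finally show ?thesis .
  qed
  have "map (\<lambda>k. D * m k) [0..<K] = map (\<lambda>c. D * c) Cs @ map (\<lambda>k. (D * E) * monom 1 k) [0..<K - j]"
    unfolding sp map_append B1 B2 ..
  thus ?thesis using A by simp
qed


lemma Om_swap:
  assumes "length L + 2 + length R = N"
  shows "Om N w (L @ [x, y] @ R) = - Om N w (L @ [y, x] @ R)"
  unfolding Om_def using Dv_swap_adj[of "map (ev w) L" "map (ev w) R" N "ev w x" "ev w y"] assms by simp

lemma Cas_Om: "length ls = N \<Longrightarrow> Cas N w D ls = Om N w (map (\<lambda>l. D * monom 1 l) ls)"
  unfolding Cas_def by (simp add: mult.commute)

definition lin :: "complex \<Rightarrow> complex poly" where "lin c = [:c, 1:]"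

lemma mon_linp: "mon (lin c) 1" unfolding lin_def by (rule mon_lin)
lemma mon_linp': "mon (lin c) (Suc 0)" using mon_linp by simp

lemma poly_lin[simp]: "poly (lin c) x = c + x" unfolding lin_def by simp

lemma poly_ext_eq: "(\<And>x. poly P x = poly Q x) \<Longrightarrow> P = (Q::complex poly)"
  using poly_eq_poly_eq_iff by blast

lemma mon2: "mon (lin u * lin v) 2"
  using mon_mult[OF mon_linp mon_linp, of u v] by (simp add: numeral_2_eq_2)

lemma Om_lin_last:
  assumes "length A + 1 = N"
  shows "Om N w (A @ [P + smult c R]) = Om N w (A @ [P]) + c * Om N w (A @ [R])"
  using Om_lin[of A "[]" N w P c R] assms by simp

context
  fixes w :: "nat \<Rightarrow> nat \<Rightarrow> complex" and u v :: complex and K :: nat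
begin

definition "MM = map (\<lambda>k. (lin u * lin v) * monom 1 k) [0..<K]"
definition "T1 = lin u * lin v * monom 1 K"
definition "T2 = lin u * lin v * monom 1 (Suc K)"
definition "T3 = lin u * lin v * monom 1 (Suc (Suc K))"

lemma length_MM[simp]: "length MM = K" by (simp add: MM_def)

lemma sq_R00: "Cas (K+2) w 1 [0..<K+2] = Om (K+2) w ([1, lin u] @ MM)"
proof -
  have "Cas (K+2) w 1 [0..<K+2] = Om (K+2) w (map (\<lambda>k. 1 * monom 1 k) [0..<K+2] @ [])"
    by (simp add: Cas_Om)
  also have "\<dots> = Om (K+2) w (map (\<lambda>c. 1 * c) [1, lin u] @ map (\<lambda>k. (1 * (lin u * lin v)) * monom 1 k) [0..<K+2 - 2] @ [])"
  proof (rule Om_chainE)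
    show "\<And>i. i < 2 \<Longrightarrow> mon ([1, lin u] ! i) i"
      using mon_one mon_linp by (auto simp: less_2_cases_iff)
  qed (auto simp: mon2)
  finally show ?thesis by (simp add: MM_def)
qed

lemma sq_R10: "Cas (K+2) w (lin u) [0..<K+2] = Om (K+2) w ([lin u] @ MM @ [T1])"
proof -
  have "Cas (K+2) w (lin u) [0..<K+2] = Om (K+2) w (map (\<lambda>k. lin u * monom 1 k) [0..<K+2] @ [])"
    by (simp add: Cas_Om)
  also have "\<dots> = Om (K+2) w (map (\<lambda>c. lin u * c) [1] @ map (\<lambda>k. (lin u * lin v) * monom 1 k) [0..<K+2 - 1] @ [])"
    by (rule Om_chainE) (auto simp: mon_one mon_linp mon_linp')
  also have "[0..<K+2 - 1] = [0..<K] @ [K]" by simp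
  finally show ?thesis by (simp add: MM_def T1_def)
qed

lemma sq_R01: "Cas (K+2) w (lin v) [0..<K+2] = Om (K+2) w ([lin v] @ MM @ [T1])"
proof -
  have "Cas (K+2) w (lin v) [0..<K+2] = Om (K+2) w (map (\<lambda>k. lin v * monom 1 k) [0..<K+2] @ [])"
    by (simp add: Cas_Om)
  also have "\<dots> = Om (K+2) w (map (\<lambda>c. lin v * c) [1] @ map (\<lambda>k. (lin v * lin u) * monom 1 k) [0..<K+2 - 1] @ [])"
    by (rule Om_chainE) (auto simp: mon_one mon_linp mon_linp')
  also have "[0..<K+2 - 1] = [0..<K] @ [K]" by simp
  finally show ?thesis by (simp add: MM_def T1_def mult.commute)
qed

lemma sq_R11: "Cas (K+2) w (lin u * lin v) [0..<K+2] = Om (K+2) w (MM @ [T1, T2])"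
proof -
  have "[0..<K+2] = [0..<K] @ [K, Suc K]" by simp
  thus ?thesis by (simp add: Cas_Om MM_def T1_def T2_def)
qed

lemma sq_G10: "Cas (K+2) w (lin u) ([0..<K+1] @ [K+2]) = Om (K+2) w ([lin u] @ MM @ [T2]) - v * Om (K+2) w ([lin u] @ MM @ [T1])"
proof -
  let ?y = "T2 + smult (-v) T1"
  let ?r = "smult (v^2) (monom 1 K)"
  have pid: "lin u * monom 1 (K+2) = ?y + lin u * ?r"
    by (rule poly_ext_eq) (simp add: T1_def T2_def poly_monom algebra_simps power2_eq_square)
  have "Cas (K+2) w (lin u) ([0..<K+1] @ [K+2]) = Om (K+2) w (map (\<lambda>k. lin u * monom 1 k) [0..<K+1] @ [lin u * monom 1 (K+2)] @ [])"
    by (simp add: Cas_Om)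
  also have "\<dots> = Om (K+2) w (map (\<lambda>k. lin u * monom 1 k) [0..<K+1] @ [?y + lin u * ?r] @ [])"
    by (simp only: pid)
  also have "\<dots> = Om (K+2) w (map (\<lambda>k. lin u * monom 1 k) [0..<K+1] @ [?y] @ [])"
    by (rule Om_span) (auto simp: degree_monom_le le_imp_less_Suc)
  also have "\<dots> = Om (K+2) w (map (\<lambda>c. lin u * c) [1] @ map (\<lambda>k. (lin u * lin v) * monom 1 k) [0..<K+1 - 1] @ [?y] @ [])"
    by (rule Om_chainE) (auto simp: mon_one mon_linp mon_linp')
  also have "\<dots> = Om (K+2) w (([lin u] @ MM) @ [?y])" by (simp add: MM_def)
  also have "\<dots> = Om (K+2) w (([lin u] @ MM) @ [T2]) + (-v) * Om (K+2) w (([lin u] @ MM) @ [T1])"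
    by (rule Om_lin_last, simp)
  finally show ?thesis by simp
qed

lemma sq_G01: "Cas (K+2) w (lin v) ([0..<K+1] @ [K+2]) = Om (K+2) w ([lin v] @ MM @ [T2]) - u * Om (K+2) w ([lin v] @ MM @ [T1])"
proof -
  let ?y = "T2 + smult (-u) T1"
  let ?r = "smult (u^2) (monom 1 K)"
  have pid: "lin v * monom 1 (K+2) = ?y + lin v * ?r"
    by (rule poly_ext_eq) (simp add: T1_def T2_def poly_monom algebra_simps power2_eq_square)
  have "Cas (K+2) w (lin v) ([0..<K+1] @ [K+2]) = Om (K+2) w (map (\<lambda>k. lin v * monom 1 k) [0..<K+1] @ [lin v * monom 1 (K+2)] @ [])"
    by (simp add: Cas_Om)
  also have "\<dots> = Om (K+2) w (map (\<lambda>k. lin v * monom 1 k) [0..<K+1] @ [?y + lin v * ?r] @ [])"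
    by (simp only: pid)
  also have "\<dots> = Om (K+2) w (map (\<lambda>k. lin v * monom 1 k) [0..<K+1] @ [?y] @ [])"
    by (rule Om_span) (auto simp: degree_monom_le le_imp_less_Suc)
  also have "\<dots> = Om (K+2) w (map (\<lambda>c. lin v * c) [1] @ map (\<lambda>k. (lin v * lin u) * monom 1 k) [0..<K+1 - 1] @ [?y] @ [])"
    by (rule Om_chainE) (auto simp: mon_one mon_linp mon_linp')
  also have "\<dots> = Om (K+2) w (([lin v] @ MM) @ [?y])" by (simp add: MM_def mult.commute)
  also have "\<dots> = Om (K+2) w (([lin v] @ MM) @ [T2]) + (-u) * Om (K+2) w (([lin v] @ MM) @ [T1])"
    by (rule Om_lin_last, simp)
  finally show ?thesis by simp
qed

lemma sq_mid: "Om (K+2) w ([lin u] @ MM @ [lin v]) = (-1)^K * (u - v) * Om (K+2) w ([1, lin u] @ MM)"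
proof -
  have mv: "Om (K+2) w ([lin u] @ [lin v] @ MM) = (-1)^K * Om (K+2) w ([lin u] @ MM @ [lin v])"
    by (subst Om_move_end, auto)
  have lv: "lin v = lin u + smult (v - u) 1" by (simp add: lin_def)
  have "Om (K+2) w ([lin u] @ [lin v] @ MM) = Om (K+2) w ([lin u] @ [lin u] @ MM) + (v - u) * Om (K+2) w ([lin u] @ [1] @ MM)"
    unfolding lv by (rule Om_lin, simp)
  also have "Om (K+2) w ([lin u] @ [lin u] @ MM) = 0" by (rule Om_rep, auto)
  also have "Om (K+2) w ([lin u] @ [1] @ MM) = - Om (K+2) w ([1, lin u] @ MM)"
    using Om_swap[of "[]" MM "K+2" w "lin u" 1] by simp
  finally have e: "Om (K+2) w ([lin u] @ [lin v] @ MM) = (u - v) * Om (K+2) w ([1, lin u] @ MM)" by (simp add: algebra_simps)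
  have "((-1::complex)^K) * ((-1)^K) = 1" by (simp add: power_mult_distrib[symmetric])
  hence "Om (K+2) w ([lin u] @ MM @ [lin v]) = (-1)^K * Om (K+2) w ([lin u] @ [lin v] @ MM)"
    using mv by (metis mult.assoc mult_1)
  thus ?thesis using e by simp
qed

lemma sq_plucker: "Om (K+2) w (MM @ [T1, T2]) * Om (K+2) w ([lin u] @ MM @ [lin v])
   + (-1)^(K+1) * Om (K+2) w ([lin v] @ MM @ [T2]) * Om (K+2) w ([lin u] @ MM @ [T1])
   + (-1)^(K+2) * Om (K+2) w ([lin v] @ MM @ [T1]) * Om (K+2) w ([lin u] @ MM @ [T2]) = 0"
  using Om_plucker_split[of "[lin u]" MM "K+2" "[lin v]" "[T1, T2]" w]
  by (simp add: del_def numeral_2_eq_2 lessThan_Suc algebra_simps)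

lemma sq_main: "(u - v) * (Cas (K+2) w (lin u) [0..<K+2] * Cas (K+2) w (lin v) [0..<K+2]
      - Cas (K+2) w 1 [0..<K+2] * Cas (K+2) w (lin u * lin v) [0..<K+2])
    + Cas (K+2) w (lin u) [0..<K+2] * Cas (K+2) w (lin v) ([0..<K+1] @ [K+2])
    - Cas (K+2) w (lin v) [0..<K+2] * Cas (K+2) w (lin u) ([0..<K+1] @ [K+2]) = 0"
proof -
  let ?s = "(-1::complex)^K"
  have s2: "?s * ?s = 1" by (simp add: power_mult_distrib[symmetric])
  have P: "?s * ((u - v) * Om (K+2) w (MM @ [T1, T2]) * Om (K+2) w ([1, lin u] @ MM)
     - Om (K+2) w ([lin v] @ MM @ [T2]) * Om (K+2) w ([lin u] @ MM @ [T1])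
     + Om (K+2) w ([lin v] @ MM @ [T1]) * Om (K+2) w ([lin u] @ MM @ [T2])) = 0"
    using sq_plucker unfolding sq_mid by (simp add: algebra_simps)
  hence P': "(u - v) * Om (K+2) w (MM @ [T1, T2]) * Om (K+2) w ([1, lin u] @ MM)
     - Om (K+2) w ([lin v] @ MM @ [T2]) * Om (K+2) w ([lin u] @ MM @ [T1])
     + Om (K+2) w ([lin v] @ MM @ [T1]) * Om (K+2) w ([lin u] @ MM @ [T2]) = 0"
    using s2 by (metis mult_eq_0_iff one_neq_zero)
  show ?thesis unfolding sq_R00 sq_R10 sq_R01 sq_R11 sq_G10 sq_G01
    using P' by (simp add: algebra_simps)
qed

lemma sq_H10: "Cas (K+2) w (lin u) ([0..<K+1] @ [K+3]) = Om (K+2) w ([lin u] @ MM @ [T3]) - v * Om (K+2) w ([lin u] @ MM @ [T2]) + v^2 * Om (K+2) w ([lin u] @ MM @ [T1])"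
proof -
  let ?y = "(T3 + smult (-v) T2) + smult (v^2) T1"
  let ?r = "smult (-(v^3)) (monom 1 K)"
  have pid: "lin u * monom 1 (K+3) = ?y + lin u * ?r"
    by (rule poly_ext_eq) (simp add: T1_def T2_def T3_def poly_monom algebra_simps power2_eq_square power3_eq_cube power_add)
  have "Cas (K+2) w (lin u) ([0..<K+1] @ [K+3]) = Om (K+2) w (map (\<lambda>k. lin u * monom 1 k) [0..<K+1] @ [lin u * monom 1 (K+3)] @ [])"
    by (simp add: Cas_Om)
  also have "\<dots> = Om (K+2) w (map (\<lambda>k. lin u * monom 1 k) [0..<K+1] @ [?y + lin u * ?r] @ [])"
    by (simp only: pid)
  also have "\<dots> = Om (K+2) w (map (\<lambda>k. lin u * monom 1 k) [0..<K+1] @ [?y] @ [])"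
    by (rule Om_span) (auto simp: degree_monom_le le_imp_less_Suc)
  also have "\<dots> = Om (K+2) w (map (\<lambda>c. lin u * c) [1] @ map (\<lambda>k. (lin u * lin v) * monom 1 k) [0..<K+1 - 1] @ [?y] @ [])"
    by (rule Om_chainE) (auto simp: mon_one mon_linp mon_linp')
  also have "\<dots> = Om (K+2) w (([lin u] @ MM) @ [?y])" by (simp add: MM_def mult.commute)
  also have "\<dots> = Om (K+2) w (([lin u] @ MM) @ [T3 + smult (-v) T2]) + (v^2) * Om (K+2) w (([lin u] @ MM) @ [T1])"
    by (rule Om_lin_last, simp)
  also have "Om (K+2) w (([lin u] @ MM) @ [T3 + smult (-v) T2]) = Om (K+2) w (([lin u] @ MM) @ [T3]) + (-v) * Om (K+2) w (([lin u] @ MM) @ [T2])"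
    by (rule Om_lin_last, simp)
  finally show ?thesis by simp
qed

lemma sq_H01: "Cas (K+2) w (lin v) ([0..<K+1] @ [K+3]) = Om (K+2) w ([lin v] @ MM @ [T3]) - u * Om (K+2) w ([lin v] @ MM @ [T2]) + u^2 * Om (K+2) w ([lin v] @ MM @ [T1])"
proof -
  let ?y = "(T3 + smult (-u) T2) + smult (u^2) T1"
  let ?r = "smult (-(u^3)) (monom 1 K)"
  have pid: "lin v * monom 1 (K+3) = ?y + lin v * ?r"
    by (rule poly_ext_eq) (simp add: T1_def T2_def T3_def poly_monom algebra_simps power2_eq_square power3_eq_cube power_add)
  have "Cas (K+2) w (lin v) ([0..<K+1] @ [K+3]) = Om (K+2) w (map (\<lambda>k. lin v * monom 1 k) [0..<K+1] @ [lin v * monom 1 (K+3)] @ [])"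
    by (simp add: Cas_Om)
  also have "\<dots> = Om (K+2) w (map (\<lambda>k. lin v * monom 1 k) [0..<K+1] @ [?y + lin v * ?r] @ [])"
    by (simp only: pid)
  also have "\<dots> = Om (K+2) w (map (\<lambda>k. lin v * monom 1 k) [0..<K+1] @ [?y] @ [])"
    by (rule Om_span) (auto simp: degree_monom_le le_imp_less_Suc)
  also have "\<dots> = Om (K+2) w (map (\<lambda>c. lin v * c) [1] @ map (\<lambda>k. (lin v * lin u) * monom 1 k) [0..<K+1 - 1] @ [?y] @ [])"
    by (rule Om_chainE) (auto simp: mon_one mon_linp mon_linp')
  also have "\<dots> = Om (K+2) w (([lin v] @ MM) @ [?y])" by (simp add: MM_def mult.commute)
  also have "\<dots> = Om (K+2) w (([lin v] @ MM) @ [T3 + smult (-u) T2]) + (u^2) * Om (K+2) w (([lin v] @ MM) @ [T1])"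
    by (rule Om_lin_last, simp)
  also have "Om (K+2) w (([lin v] @ MM) @ [T3 + smult (-u) T2]) = Om (K+2) w (([lin v] @ MM) @ [T3]) + (-u) * Om (K+2) w (([lin v] @ MM) @ [T2])"
    by (rule Om_lin_last, simp)
  finally show ?thesis by simp
qed

lemma sq_G11: "Cas (K+2) w (lin u * lin v) ([0..<K+1] @ [K+2]) = Om (K+2) w (MM @ [T1, T3])"
proof -
  have "[0..<K+1] @ [K+2] = [0..<K] @ [K, Suc (Suc K)]" by simp
  thus ?thesis by (simp add: Cas_Om MM_def T1_def T3_def)
qed

lemma sq_plucker3: "Om (K+2) w (MM @ [T1, T3]) * Om (K+2) w ([lin u] @ MM @ [lin v])
   + (-1)^(K+1) * Om (K+2) w ([lin v] @ MM @ [T3]) * Om (K+2) w ([lin u] @ MM @ [T1])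
   + (-1)^(K+2) * Om (K+2) w ([lin v] @ MM @ [T1]) * Om (K+2) w ([lin u] @ MM @ [T3]) = 0"
  using Om_plucker_split[of "[lin u]" MM "K+2" "[lin v]" "[T1, T3]" w]
  by (simp add: del_def numeral_2_eq_2 lessThan_Suc algebra_simps)

lemma sq_h_main: "Cas (K+2) w (lin u) [0..<K+2] * (v^2 * Cas (K+2) w (lin v) [0..<K+2] - v * Cas (K+2) w (lin v) ([0..<K+1] @ [K+2]) + Cas (K+2) w (lin v) ([0..<K+1] @ [K+3]))
   + u * Cas (K+2) w (lin u) [0..<K+2] * (Cas (K+2) w (lin v) ([0..<K+1] @ [K+2]) - v * Cas (K+2) w (lin v) [0..<K+2])
   - (u - v) * Cas (K+2) w 1 [0..<K+2] * (Cas (K+2) w (lin u * lin v) ([0..<K+1] @ [K+2]) - v * Cas (K+2) w (lin u * lin v) [0..<K+2])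
   - Cas (K+2) w (lin v) [0..<K+2] * Cas (K+2) w (lin u) ([0..<K+1] @ [K+3]) = 0"
proof -
  let ?s = "(-1::complex)^K"
  have s2: "?s * ?s = 1" by (simp add: power_mult_distrib[symmetric])
  have P1: "?s * ((u - v) * Om (K+2) w (MM @ [T1, T2]) * Om (K+2) w ([1, lin u] @ MM)
     - Om (K+2) w ([lin v] @ MM @ [T2]) * Om (K+2) w ([lin u] @ MM @ [T1])
     + Om (K+2) w ([lin v] @ MM @ [T1]) * Om (K+2) w ([lin u] @ MM @ [T2])) = 0"
    using sq_plucker unfolding sq_mid by (simp add: algebra_simps)
  hence P1': "(u - v) * Om (K+2) w (MM @ [T1, T2]) * Om (K+2) w ([1, lin u] @ MM)
     - Om (K+2) w ([lin v] @ MM @ [T2]) * Om (K+2) w ([lin u] @ MM @ [T1])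
     + Om (K+2) w ([lin v] @ MM @ [T1]) * Om (K+2) w ([lin u] @ MM @ [T2]) = 0"
    using s2 by (metis mult_eq_0_iff one_neq_zero)
  have P3: "?s * ((u - v) * Om (K+2) w (MM @ [T1, T3]) * Om (K+2) w ([1, lin u] @ MM)
     - Om (K+2) w ([lin v] @ MM @ [T3]) * Om (K+2) w ([lin u] @ MM @ [T1])
     + Om (K+2) w ([lin v] @ MM @ [T1]) * Om (K+2) w ([lin u] @ MM @ [T3])) = 0"
    using sq_plucker3 unfolding sq_mid by (simp add: algebra_simps)
  hence P3': "(u - v) * Om (K+2) w (MM @ [T1, T3]) * Om (K+2) w ([1, lin u] @ MM)
     - Om (K+2) w ([lin v] @ MM @ [T3]) * Om (K+2) w ([lin u] @ MM @ [T1])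
     + Om (K+2) w ([lin v] @ MM @ [T1]) * Om (K+2) w ([lin u] @ MM @ [T3]) = 0"
    using s2 by (metis mult_eq_0_iff one_neq_zero)
  let ?a = "Om (K+2) w ([lin u] @ MM @ [T1])" and ?b = "Om (K+2) w ([lin v] @ MM @ [T1])"
  let ?A2 = "Om (K+2) w ([lin u] @ MM @ [T2])" and ?B2 = "Om (K+2) w ([lin v] @ MM @ [T2])"
  let ?A3 = "Om (K+2) w ([lin u] @ MM @ [T3])" and ?B3 = "Om (K+2) w ([lin v] @ MM @ [T3])"
  let ?F = "Om (K+2) w ([1, lin u] @ MM)"
  let ?E12 = "Om (K+2) w (MM @ [T1, T2])" and ?E13 = "Om (K+2) w (MM @ [T1, T3])"
  have "?a * (v^2 * ?b - v * (?B2 - u * ?b) + (?B3 - u * ?B2 + u^2 * ?b)) + u * ?a * (?B2 - u * ?b - v * ?b)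
     - (u - v) * ?F * (?E13 - v * ?E12) - ?b * (?A3 - v * ?A2 + v^2 * ?a)
     = - ((u - v) * ?E13 * ?F - ?B3 * ?a + ?b * ?A3) + v * ((u - v) * ?E12 * ?F - ?B2 * ?a + ?b * ?A2)"
    by (simp add: algebra_simps power2_eq_square)
  also have "\<dots> = 0" using P1' P3' by simp
  finally show ?thesis unfolding sq_R00 sq_R10 sq_R01 sq_R11 sq_G10 sq_G01 sq_H10 sq_H01 sq_G11
    by (simp add: algebra_simps)
qed

end

context
  fixes w :: "nat \<Rightarrow> nat \<Rightarrow> complex" and u :: complex and K :: nat
begin

definition "M5 = map (\<lambda>k. lin u * monom 1 k) [0..<K]"
definition "L1 = lin u * monom 1 K"
definition "L2 = lin u * monom 1 (Suc K)"
definition "L3 = lin u * monom 1 (Suc (Suc K))"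

lemma length_M5[simp]: "length M5 = K" by (simp add: M5_def)

lemma ln_f: "Cas (K+2) w 1 [0..<K+2] = Om (K+2) w ([1] @ M5 @ [L1])"
proof -
  have "Cas (K+2) w 1 [0..<K+2] = Om (K+2) w (map (\<lambda>k. 1 * monom 1 k) [0..<K+2] @ [])"
    by (simp add: Cas_Om)
  also have "\<dots> = Om (K+2) w (map (\<lambda>c. 1 * c) [1] @ map (\<lambda>k. (1 * lin u) * monom 1 k) [0..<K+2 - 1] @ [])"
    by (rule Om_chainE) (auto simp: mon_one mon_linp mon_linp')
  also have "[0..<K+2 - 1] = [0..<K] @ [K]" by simp
  finally show ?thesis by (simp add: M5_def L1_def)
qed

lemma ln_ft: "Cas (K+2) w (lin u) [0..<K+2] = Om (K+2) w (M5 @ [L1, L2])"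
proof -
  have "[0..<K+2] = [0..<K] @ [K, Suc K]" by simp
  thus ?thesis by (simp add: Cas_Om M5_def L1_def L2_def)
qed

lemma ln_gt: "Cas (K+2) w (lin u) ([0..<K+1] @ [K+2]) = Om (K+2) w (M5 @ [L1, L3])"
proof -
  have "[0..<K+1] @ [K+2] = [0..<K] @ [K, Suc (Suc K)]" by simp
  thus ?thesis by (simp add: Cas_Om M5_def L1_def L3_def)
qed

lemma ln_st: "Cas (K+2) w (lin u) ([0..<K+2-2] @ [K+2-1, K+2]) = Om (K+2) w (M5 @ [L2, L3])"
proof -
  have "[0..<K+2-2] @ [K+2-1, K+2] = [0..<K] @ [Suc K, Suc (Suc K)]" by simp
  thus ?thesis by (simp add: Cas_Om M5_def L2_def L3_def)
qed

lemma ln_g: "Cas (K+2) w 1 ([0..<K+1] @ [K+2]) = Om (K+2) w ([1] @ M5 @ [L2]) - u * Om (K+2) w ([1] @ M5 @ [L1])"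
proof -
  let ?y = "L2 + smult (-u) L1"
  let ?r = "smult (u^2) (monom 1 K)"
  have pid: "1 * monom 1 (K+2) = ?y + 1 * ?r"
    by (rule poly_ext_eq) (simp add: L1_def L2_def poly_monom algebra_simps power2_eq_square power_add)
  have "Cas (K+2) w 1 ([0..<K+1] @ [K+2]) = Om (K+2) w (map (\<lambda>k. 1 * monom 1 k) [0..<K+1] @ [1 * monom 1 (K+2)] @ [])"
    by (simp add: Cas_Om)
  also have "\<dots> = Om (K+2) w (map (\<lambda>k. 1 * monom 1 k) [0..<K+1] @ [?y + 1 * ?r] @ [])"
    by (simp only: pid)
  also have "\<dots> = Om (K+2) w (map (\<lambda>k. 1 * monom 1 k) [0..<K+1] @ [?y] @ [])"
    by (rule Om_span) (auto simp: degree_monom_le le_imp_less_Suc)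
  also have "\<dots> = Om (K+2) w (map (\<lambda>c. 1 * c) [1] @ map (\<lambda>k. (1 * lin u) * monom 1 k) [0..<K+1 - 1] @ [?y] @ [])"
    by (rule Om_chainE) (auto simp: mon_one mon_linp mon_linp')
  also have "\<dots> = Om (K+2) w (([1] @ M5) @ [?y])" by (simp add: M5_def)
  also have "\<dots> = Om (K+2) w (([1] @ M5) @ [L2]) + (-u) * Om (K+2) w (([1] @ M5) @ [L1])"
    by (rule Om_lin_last, simp)
  finally show ?thesis by simp
qed

lemma ln_h: "Cas (K+2) w 1 ([0..<K+1] @ [K+3]) = Om (K+2) w ([1] @ M5 @ [L3]) - u * Om (K+2) w ([1] @ M5 @ [L2]) + u^2 * Om (K+2) w ([1] @ M5 @ [L1])"
proof -
  let ?y = "(L3 + smult (-u) L2) + smult (u^2) L1"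
  let ?r = "smult (-(u^3)) (monom 1 K)"
  have pid: "1 * monom 1 (K+3) = ?y + 1 * ?r"
    by (rule poly_ext_eq) (simp add: L1_def L2_def L3_def poly_monom algebra_simps power2_eq_square power3_eq_cube power_add)
  have "Cas (K+2) w 1 ([0..<K+1] @ [K+3]) = Om (K+2) w (map (\<lambda>k. 1 * monom 1 k) [0..<K+1] @ [1 * monom 1 (K+3)] @ [])"
    by (simp add: Cas_Om)
  also have "\<dots> = Om (K+2) w (map (\<lambda>k. 1 * monom 1 k) [0..<K+1] @ [?y + 1 * ?r] @ [])"
    by (simp only: pid)
  also have "\<dots> = Om (K+2) w (map (\<lambda>k. 1 * monom 1 k) [0..<K+1] @ [?y] @ [])"
    by (rule Om_span) (auto simp: degree_monom_le le_imp_less_Suc)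
  also have "\<dots> = Om (K+2) w (map (\<lambda>c. 1 * c) [1] @ map (\<lambda>k. (1 * lin u) * monom 1 k) [0..<K+1 - 1] @ [?y] @ [])"
    by (rule Om_chainE) (auto simp: mon_one mon_linp mon_linp')
  also have "\<dots> = Om (K+2) w (([1] @ M5) @ [?y])" by (simp add: M5_def)
  also have "\<dots> = Om (K+2) w (([1] @ M5) @ [L3 + smult (-u) L2]) + (u^2) * Om (K+2) w (([1] @ M5) @ [L1])"
    by (rule Om_lin_last, simp)
  also have "Om (K+2) w (([1] @ M5) @ [L3 + smult (-u) L2]) = Om (K+2) w (([1] @ M5) @ [L3]) + (-u) * Om (K+2) w (([1] @ M5) @ [L2])"
    by (rule Om_lin_last, simp)
  finally show ?thesis by simp
qed

lemma ln_plucker: "(-1)^K * (Om (K+2) w (M5 @ [L2, L3]) * Om (K+2) w ([1] @ M5 @ [L1])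
    - Om (K+2) w (M5 @ [L1, L3]) * Om (K+2) w ([1] @ M5 @ [L2])
    + Om (K+2) w (M5 @ [L1, L2]) * Om (K+2) w ([1] @ M5 @ [L3])) = 0"
  using Om_plucker_split[of "[1]" M5 "K+2" "[]" "[L1, L2, L3]" w]
  by (simp add: del_def numeral_3_eq_3 lessThan_Suc algebra_simps)

lemma ln_main: "Cas (K+2) w (lin u) [0..<K+2] * (u * Cas (K+2) w 1 ([0..<K+1] @ [K+2]) + Cas (K+2) w 1 ([0..<K+1] @ [K+3]))
   - Cas (K+2) w (lin u) ([0..<K+1] @ [K+2]) * (u * Cas (K+2) w 1 [0..<K+2] + Cas (K+2) w 1 ([0..<K+1] @ [K+2]))
   + Cas (K+2) w 1 [0..<K+2] * Cas (K+2) w (lin u) ([0..<K+2-2] @ [K+2-1, K+2]) = 0"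
proof -
  let ?s = "(-1::complex)^K"
  have s2: "?s * ?s = 1" by (simp add: power_mult_distrib[symmetric])
  have P: "Om (K+2) w (M5 @ [L2, L3]) * Om (K+2) w ([1] @ M5 @ [L1])
    - Om (K+2) w (M5 @ [L1, L3]) * Om (K+2) w ([1] @ M5 @ [L2])
    + Om (K+2) w (M5 @ [L1, L2]) * Om (K+2) w ([1] @ M5 @ [L3]) = 0"
    using ln_plucker s2 by (metis mult_eq_0_iff one_neq_zero)
  show ?thesis unfolding ln_f ln_ft ln_gt ln_st ln_g ln_h
    using P by (simp add: algebra_simps power2_eq_square)
qed

end


lemma Om_span2:
  assumes dr: "degree r < K" and len: "K + length A + 1 + length B = N"
  shows "Om N w (map (\<lambda>k. R * monom 1 k) [0..<K] @ A @ [y + R * r] @ B) = Om N w (map (\<lambda>k. R * monom 1 k) [0..<K] @ A @ [y] @ B)"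
proof (rule Om_unitri[where U="\<lambda>t j. if j = K + length A \<and> t < K then coeff r t else 0"])
  fix j assume j: "j < N"
  let ?Ps = "map (\<lambda>k. R * monom 1 k) [0..<K] @ A @ [y] @ B"
  show "(map (\<lambda>k. R * monom 1 k) [0..<K] @ A @ [y + R * r] @ B) ! j = ?Ps ! j +
      (\<Sum>t<j. smult (if j = K + length A \<and> t < K then coeff r t else 0) (?Ps ! t))"
  proof (cases "j = K + length A")
    case True
    have "R * r = R * (\<Sum>t<K. monom (coeff r t) t)"
      by (subst poly_monom_sum[OF dr], simp)
    also have "\<dots> = (\<Sum>t<K. smult (coeff r t) (R * monom 1 t))"
      unfolding sum_distrib_left by (rule sum.cong[OF refl], rule mult_monom_smult)
    also have "\<dots> = (\<Sum>t<K. smult (coeff r t) (?Ps ! t))"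
      by (rule sum.cong, auto simp: nth_append)
    also have "\<dots> = (\<Sum>t<j. smult (if j = K + length A \<and> t < K then coeff r t else 0) (?Ps ! t))"
    proof -
      have "(\<Sum>t<j. smult (if j = K + length A \<and> t < K then coeff r t else 0) (?Ps ! t))
          = (\<Sum>t<j. if t < K then smult (coeff r t) (?Ps ! t) else 0)"
        using True by (intro sum.cong) auto
      also have "\<dots> = (\<Sum>t\<in>{..<j} \<inter> {t. t < K}. smult (coeff r t) (?Ps ! t))"
        by (simp add: sum.If_cases)
      also have "{..<j} \<inter> {t. t < K} = {..<K}" using True by auto
      finally show ?thesis by simp
    qed
    finally show ?thesis using True by (simp add: nth_append)
  next
    case False thus ?thesis by (auto simp: nth_append intro!: sum.neutral)
  qed
qed (use len in auto)

lemma Om_lin_mid: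
  assumes "length A + 1 + length B = N"
  shows "Om N w (A @ [P + smult c R] @ B) = Om N w (A @ [P] @ B) + c * Om N w (A @ [R] @ B)"
  by (rule Om_lin[OF assms])

lemma Om_move3:
  assumes "4 + length R = N"
  shows "Om N w ([x, c1, c2, c3] @ R) = - Om N w ([c1, c2, c3, x] @ R)"
proof -
  have "Om N w ([x, c1, c2, c3] @ R) = Om N w ([] @ [x, c1] @ ([c2, c3] @ R))" by simp
  also have "\<dots> = - Om N w ([] @ [c1, x] @ ([c2, c3] @ R))" by (rule Om_swap, use assms in simp)
  also have "Om N w ([] @ [c1, x] @ ([c2, c3] @ R)) = Om N w ([c1] @ [x, c2] @ ([c3] @ R))" by simp
  also have "\<dots> = - Om N w ([c1] @ [c2, x] @ ([c3] @ R))" by (rule Om_swap, use assms in simp)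
  also have "Om N w ([c1] @ [c2, x] @ ([c3] @ R)) = Om N w ([c1, c2] @ [x, c3] @ R)" by simp
  also have "\<dots> = - Om N w ([c1, c2] @ [c3, x] @ R)" by (rule Om_swap, use assms in simp)
  finally show ?thesis by simp
qed

lemma mon_Qc: "mon [:e3, e2, e1, 1:] 3" unfolding mon_def by (simp add: numeral_3_eq_3)

lemma mon_linX: "mon (lin v * monom 1 k) (Suc k)"
  using mon_mult[OF mon_linp mon_monom, of v k] by simp

context
  fixes w :: "nat \<Rightarrow> nat \<Rightarrow> complex" and u v e1 e2 e3 :: complex and K :: nat
begin

definition "Qc = [:e3, e2, e1, 1:]"
definition "DD = lin u * lin v"
definition "TT = lin u * lin v * Qc"
definition "MP = map (\<lambda>k. TT * monom 1 k) [0..<K]"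
definition "U1 = TT * monom 1 K"
definition "U2 = TT * monom 1 (Suc K)"
definition "U3 = TT * monom 1 (Suc (Suc K))"
definition "CC = [DD, DD * monom 1 1, DD * monom 1 2]"
definition "ell x = Om (K+4) w (CC @ [x] @ MP)"
definition "Kf x = Om (K+4) w ([x] @ MP @ [U1, U2, U3])"
definition "Xf a b = Om (K+4) w ([Qc, Qc * lin u] @ MP @ [a, b])"
definition "Yf a = Om (K+4) w (CC @ MP @ [a])"

lemma length_MP[simp]: "length MP = K" by (simp add: MP_def)
lemma length_CC[simp]: "length CC = 3" by (simp add: CC_def)
lemma mon_Qc': "mon Qc 3" unfolding Qc_def by (rule mon_Qc)

lemma c4_fZ: "Cas (K+4) w Qc [0..<K+4] = Xf U1 U2"
proof -
  have "Cas (K+4) w Qc [0..<K+4] = Om (K+4) w (map (\<lambda>k. Qc * monom 1 k) [0..<K+4] @ [])"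
    by (simp add: Cas_Om)
  also have "\<dots> = Om (K+4) w (map (\<lambda>c. Qc * c) [1, lin u] @ map (\<lambda>k. (Qc * (lin u * lin v)) * monom 1 k) [0..<K+4 - 2] @ [])"
  proof (rule Om_chainE)
    show "\<And>i. i < 2 \<Longrightarrow> mon ([1, lin u] ! i) i"
      using mon_one mon_linp by (auto simp: less_2_cases_iff)
  qed (auto simp: mon2)
  also have "[0..<K+4 - 2] = [0..<K] @ [K, Suc K]" by (simp add: numeral_2_eq_2)
  finally show ?thesis by (simp add: Xf_def MP_def U1_def U2_def TT_def mult_ac)
qed

lemma c4_F: "Cas (K+4) w DD [0..<K+4] = Yf U1"
proof -
  have "Cas (K+4) w DD [0..<K+4] = Om (K+4) w (map (\<lambda>k. DD * monom 1 k) [0..<K+4] @ [])"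
    by (simp add: Cas_Om)
  also have "\<dots> = Om (K+4) w (map (\<lambda>c. DD * c) [1, monom 1 1, monom 1 2] @ map (\<lambda>k. (DD * Qc) * monom 1 k) [0..<K+4 - 3] @ [])"
  proof (rule Om_chainE)
    show "\<And>i. i < 3 \<Longrightarrow> mon ([1, monom 1 1, monom 1 2] ! i) i"
      using mon_one mon_monom by (auto simp: less_Suc_eq numeral_3_eq_3 numeral_2_eq_2)
  qed (auto simp: mon_Qc')
  also have "[0..<K+4 - 3] = [0..<K] @ [K]" by (simp add: numeral_3_eq_3)
  finally show ?thesis by (simp add: Yf_def MP_def U1_def CC_def TT_def DD_def mult_ac)
qed

lemma c4_fpZ: "Cas (K+4) w (lin u * Qc) [0..<K+4] = Kf (Qc * lin u)"
proof -
  have "Cas (K+4) w (lin u * Qc) [0..<K+4] = Om (K+4) w (map (\<lambda>k. (lin u * Qc) * monom 1 k) [0..<K+4] @ [])"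
    by (simp add: Cas_Om)
  also have "\<dots> = Om (K+4) w (map (\<lambda>c. (lin u * Qc) * c) [1] @ map (\<lambda>k. ((lin u * Qc) * lin v) * monom 1 k) [0..<K+4 - 1] @ [])"
    by (rule Om_chainE) (auto simp: mon_one mon_linp mon_linp')
  also have "[0..<K+4 - 1] = [0..<K] @ [K, Suc K, Suc (Suc K)]" by (simp add: numeral_3_eq_3)
  finally show ?thesis by (simp add: Kf_def MP_def U1_def U2_def U3_def TT_def mult_ac)
qed

lemma c4_fqZ: "Cas (K+4) w (lin v * Qc) [0..<K+4] = Kf (Qc * lin v)"
proof -
  have "Cas (K+4) w (lin v * Qc) [0..<K+4] = Om (K+4) w (map (\<lambda>k. (lin v * Qc) * monom 1 k) [0..<K+4] @ [])"
    by (simp add: Cas_Om)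
  also have "\<dots> = Om (K+4) w (map (\<lambda>c. (lin v * Qc) * c) [1] @ map (\<lambda>k. ((lin v * Qc) * lin u) * monom 1 k) [0..<K+4 - 1] @ [])"
    by (rule Om_chainE) (auto simp: mon_one mon_linp mon_linp')
  also have "[0..<K+4 - 1] = [0..<K] @ [K, Suc K, Suc (Suc K)]" by (simp add: numeral_3_eq_3)
  finally show ?thesis by (simp add: Kf_def MP_def U1_def U2_def U3_def TT_def mult_ac)
qed

lemma c4_fp: "Cas (K+4) w (lin u) [0..<K+4] = - ell (lin u)"
proof -
  have "Cas (K+4) w (lin u) [0..<K+4] = Om (K+4) w (map (\<lambda>k. lin u * monom 1 k) [0..<K+4] @ [])"
    by (simp add: Cas_Om)
  also have "\<dots> = Om (K+4) w (map (\<lambda>c. lin u * c) [1, lin v, lin v * monom 1 1, lin v * monom 1 2] @ map (\<lambda>k. (lin u * (lin v * Qc)) * monom 1 k) [0..<K+4 - 4] @ [])"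
  proof (rule Om_chainE)
    show "\<And>i. i < 4 \<Longrightarrow> mon ([1, lin v, lin v * monom 1 1, lin v * monom 1 2] ! i) i"
      using mon_one mon_linp' mon_linX by (auto simp: less_Suc_eq numeral_3_eq_3 numeral_2_eq_2 eval_nat_numeral)
    show "mon (lin v * Qc) 4" using mon_mult[OF mon_linp mon_Qc', of v] by simp
  qed auto
  also have "\<dots> = Om (K+4) w ([lin u, DD, DD * monom 1 1, DD * monom 1 2] @ MP)"
    by (simp add: MP_def TT_def DD_def mult_ac)
  also have "\<dots> = - Om (K+4) w ([DD, DD * monom 1 1, DD * monom 1 2, lin u] @ MP)"
    by (rule Om_move3, simp)
  finally show ?thesis by (simp add: ell_def CC_def)
qed

lemma c4_fq: "Cas (K+4) w (lin v) [0..<K+4] = - ell (lin v)"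
proof -
  have "Cas (K+4) w (lin v) [0..<K+4] = Om (K+4) w (map (\<lambda>k. lin v * monom 1 k) [0..<K+4] @ [])"
    by (simp add: Cas_Om)
  also have "\<dots> = Om (K+4) w (map (\<lambda>c. lin v * c) [1, lin u, lin u * monom 1 1, lin u * monom 1 2] @ map (\<lambda>k. (lin v * (lin u * Qc)) * monom 1 k) [0..<K+4 - 4] @ [])"
  proof (rule Om_chainE)
    show "\<And>i. i < 4 \<Longrightarrow> mon ([1, lin u, lin u * monom 1 1, lin u * monom 1 2] ! i) i"
      using mon_one mon_linp' mon_linX by (auto simp: less_Suc_eq numeral_3_eq_3 numeral_2_eq_2 eval_nat_numeral)
    show "mon (lin u * Qc) 4" using mon_mult[OF mon_linp mon_Qc', of u] by simp
  qed auto
  also have "\<dots> = Om (K+4) w ([lin v, DD, DD * monom 1 1, DD * monom 1 2] @ MP)"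
    by (simp add: MP_def TT_def DD_def mult_ac)
  also have "\<dots> = - Om (K+4) w ([DD, DD * monom 1 1, DD * monom 1 2, lin v] @ MP)"
    by (rule Om_move3, simp)
  finally show ?thesis by (simp add: ell_def CC_def)
qed


lemma deg_sm: "degree (smult a (monom (1::complex) n)) < m" if "n < m"
  using that degree_smult_le[of a "monom 1 n"] degree_monom_le[of "1::complex" n] by linarith

lemma c4_gZ: "Cas (K+4) w Qc ([0..<K+3] @ [K+4]) = Xf U1 U3 - (u + v) * Xf U1 U2"
proof -
  let ?y = "U3 + smult (-(u+v)) U2"
  let ?r = "smult (u^2 + u*v + v^2) (monom 1 (K+2)) + smult (u*v*(u+v)) (monom 1 (K+1))"
  have pid: "Qc * monom 1 (K+4) = ?y + Qc * ?r"
    by (rule poly_ext_eq) (simp add: U2_def U3_def TT_def poly_monom algebra_simps power2_eq_square power_add eval_nat_numeral)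
  have "Cas (K+4) w Qc ([0..<K+3] @ [K+4]) = Om (K+4) w (map (\<lambda>k. Qc * monom 1 k) [0..<K+3] @ [Qc * monom 1 (K+4)] @ [])"
    by (simp add: Cas_Om)
  also have "\<dots> = Om (K+4) w (map (\<lambda>k. Qc * monom 1 k) [0..<K+3] @ [?y + Qc * ?r] @ [])"
    by (simp only: pid)
  also have "\<dots> = Om (K+4) w (map (\<lambda>k. Qc * monom 1 k) [0..<K+3] @ [?y] @ [])"
    by (rule Om_span) (auto intro!: degree_add_less degree_diff_less deg_sm)
  also have "\<dots> = Om (K+4) w (map (\<lambda>c. Qc * c) [1, lin u] @ map (\<lambda>k. (Qc * (lin u * lin v)) * monom 1 k) [0..<K+3 - 2] @ [?y] @ [])"
  proof (rule Om_chainE)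
    show "\<And>i. i < 2 \<Longrightarrow> mon ([1, lin u] ! i) i"
      using mon_one mon_linp by (auto simp: less_2_cases_iff)
  qed (auto simp: mon2)
  also have "\<dots> = Om (K+4) w (([Qc, Qc * lin u] @ MP @ [U1]) @ [?y])"
  proof -
    have "[0..<K+3 - 2] = [0..<K] @ [K]" by (simp add: numeral_2_eq_2 numeral_3_eq_3)
    thus ?thesis by (simp add: MP_def U1_def TT_def mult_ac)
  qed
  also have "\<dots> = Om (K+4) w (([Qc, Qc * lin u] @ MP @ [U1]) @ [U3]) + (-(u+v)) * Om (K+4) w (([Qc, Qc * lin u] @ MP @ [U1]) @ [U2])"
    by (rule Om_lin_last, simp)
  finally show ?thesis by (simp add: Xf_def algebra_simps)
qed

lemma c4_G: "Cas (K+4) w DD ([0..<K+3] @ [K+4]) = Yf U2 - e1 * Yf U1"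
proof -
  let ?y = "U2 + smult (-e1) U1"
  let ?r = "smult (e1^2 - e2) (monom 1 (K+2)) + smult (e1*e2 - e3) (monom 1 (K+1)) + smult (e1*e3) (monom 1 K)"
  have pid: "DD * monom 1 (K+4) = ?y + DD * ?r"
    by (rule poly_ext_eq) (simp add: U1_def U2_def TT_def DD_def Qc_def poly_monom algebra_simps power2_eq_square power_add eval_nat_numeral)
  have "Cas (K+4) w DD ([0..<K+3] @ [K+4]) = Om (K+4) w (map (\<lambda>k. DD * monom 1 k) [0..<K+3] @ [DD * monom 1 (K+4)] @ [])"
    by (simp add: Cas_Om)
  also have "\<dots> = Om (K+4) w (map (\<lambda>k. DD * monom 1 k) [0..<K+3] @ [?y + DD * ?r] @ [])"
    by (simp only: pid)
  also have "\<dots> = Om (K+4) w (map (\<lambda>k. DD * monom 1 k) [0..<K+3] @ [?y] @ [])"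
    by (rule Om_span) (auto intro!: degree_add_less degree_diff_less deg_sm)
  also have "\<dots> = Om (K+4) w (map (\<lambda>c. DD * c) [1, monom 1 1, monom 1 2] @ map (\<lambda>k. (DD * Qc) * monom 1 k) [0..<K+3 - 3] @ [?y] @ [])"
  proof (rule Om_chainE)
    show "\<And>i. i < 3 \<Longrightarrow> mon ([1, monom 1 1, monom 1 2] ! i) i"
      using mon_one mon_monom by (auto simp: less_Suc_eq numeral_3_eq_3 numeral_2_eq_2)
  qed (auto simp: mon_Qc')
  also have "\<dots> = Om (K+4) w ((CC @ MP) @ [?y])"
    by (simp add: MP_def CC_def TT_def DD_def mult_ac numeral_3_eq_3)
  also have "\<dots> = Om (K+4) w ((CC @ MP) @ [U2]) + (-e1) * Om (K+4) w ((CC @ MP) @ [U1])"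
    by (rule Om_lin_last, simp)
  finally show ?thesis by (simp add: Yf_def algebra_simps)
qed

lemma c4_H: "Cas (K+4) w DD ([0..<K+3] @ [K+5]) = Yf U3 - e1 * Yf U2 + (e1^2 - e2) * Yf U1"
proof -
  let ?y = "(U3 + smult (-e1) U2) + smult (e1^2 - e2) U1"
  let ?r = "smult (-(e3 - 2*e1*e2 + e1^3)) (monom 1 (K+2)) + smult (e1*e3 - e1^2*e2 + e2^2) (monom 1 (K+1)) + smult (-((e1^2 - e2)*e3)) (monom 1 K)"
  have pid: "DD * monom 1 (K+5) = ?y + DD * ?r"
    by (rule poly_ext_eq) (simp add: U1_def U2_def U3_def TT_def DD_def Qc_def poly_monom algebra_simps power2_eq_square power3_eq_cube power_add eval_nat_numeral)
  have "Cas (K+4) w DD ([0..<K+3] @ [K+5]) = Om (K+4) w (map (\<lambda>k. DD * monom 1 k) [0..<K+3] @ [DD * monom 1 (K+5)] @ [])"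
    by (simp add: Cas_Om)
  also have "\<dots> = Om (K+4) w (map (\<lambda>k. DD * monom 1 k) [0..<K+3] @ [?y + DD * ?r] @ [])"
    by (simp only: pid)
  also have "\<dots> = Om (K+4) w (map (\<lambda>k. DD * monom 1 k) [0..<K+3] @ [?y] @ [])"
    by (rule Om_span) (auto intro!: degree_add_less degree_diff_less deg_sm)
  also have "\<dots> = Om (K+4) w (map (\<lambda>c. DD * c) [1, monom 1 1, monom 1 2] @ map (\<lambda>k. (DD * Qc) * monom 1 k) [0..<K+3 - 3] @ [?y] @ [])"
  proof (rule Om_chainE)
    show "\<And>i. i < 3 \<Longrightarrow> mon ([1, monom 1 1, monom 1 2] ! i) i"
      using mon_one mon_monom by (auto simp: less_Suc_eq numeral_3_eq_3 numeral_2_eq_2)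
  qed (auto simp: mon_Qc')
  also have "\<dots> = Om (K+4) w ((CC @ MP) @ [?y])"
    by (simp add: MP_def CC_def TT_def DD_def mult_ac numeral_3_eq_3)
  also have "\<dots> = Om (K+4) w ((CC @ MP) @ [U3 + smult (-e1) U2]) + (e1^2 - e2) * Om (K+4) w ((CC @ MP) @ [U1])"
    by (rule Om_lin_last, simp)
  also have "Om (K+4) w ((CC @ MP) @ [U3 + smult (-e1) U2]) = Om (K+4) w ((CC @ MP) @ [U3]) + (-e1) * Om (K+4) w ((CC @ MP) @ [U2])"
    by (rule Om_lin_last, simp)
  finally show ?thesis by (simp add: Yf_def algebra_simps)
qed


lemma c4_sZ: "Cas (K+4) w Qc ([0..<K+2] @ [K+3, K+4]) = Xf U2 U3 - (u + v) * Xf U1 U3 + u * v * Xf U1 U2"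
proof -
  let ?e = "u + v" and ?h = "u^2 + u*v + v^2"
  let ?y1 = "U2 + smult (-?e) U1"
  let ?r1 = "smult ?h (monom 1 (K+1)) + smult (u*v*?e) (monom 1 K)"
  let ?y2 = "(U3 + smult (-?e) U2) + smult ?h U1"
  let ?r2 = "smult (-(?e^3 - 2*?e*(u*v))) (monom 1 (K+1)) + smult (-((?e^2 - u*v)*(u*v))) (monom 1 K)"
  have pid1: "Qc * monom 1 (K+3) = ?y1 + Qc * ?r1"
    by (rule poly_ext_eq) (simp add: U1_def U2_def TT_def poly_monom algebra_simps power2_eq_square power_add eval_nat_numeral)
  have pid2: "Qc * monom 1 (K+4) = ?y2 + Qc * ?r2"
    by (rule poly_ext_eq) (simp add: U1_def U2_def U3_def TT_def poly_monom algebra_simps power2_eq_square power3_eq_cube power_add eval_nat_numeral)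
  let ?P = "map (\<lambda>k. Qc * monom 1 k) [0..<K+2]"
  have "Cas (K+4) w Qc ([0..<K+2] @ [K+3, K+4]) = Om (K+4) w (?P @ [Qc * monom 1 (K+3)] @ [Qc * monom 1 (K+4)] @ [])"
    by (simp add: Cas_Om)
  also have "\<dots> = Om (K+4) w (?P @ [?y1 + Qc * ?r1] @ [?y2 + Qc * ?r2] @ [])"
    by (simp only: pid1 pid2)
  also have "\<dots> = Om (K+4) w (?P @ [?y1 + Qc * ?r1] @ [?y2] @ [])"
    by (rule Om_span2) (auto intro!: degree_add_less degree_diff_less deg_sm)
  also have "\<dots> = Om (K+4) w (?P @ [?y1] @ [?y2] @ [])"
    by (rule Om_span) (auto intro!: degree_add_less degree_diff_less deg_sm)
  also have "\<dots> = Om (K+4) w (map (\<lambda>c. Qc * c) [1, lin u] @ map (\<lambda>k. (Qc * (lin u * lin v)) * monom 1 k) [0..<K+2 - 2] @ ([?y1] @ [?y2] @ []))"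
  proof (rule Om_chainE)
    show "\<And>i. i < 2 \<Longrightarrow> mon ([1, lin u] ! i) i"
      using mon_one mon_linp by (auto simp: less_2_cases_iff)
  qed (auto simp: mon2)
  also have "\<dots> = Om (K+4) w (([Qc, Qc * lin u] @ MP) @ [?y1] @ [?y2])"
    by (simp add: MP_def TT_def mult_ac)
  also have "\<dots> = Om (K+4) w (([Qc, Qc * lin u] @ MP) @ [U2] @ [?y2]) + (-?e) * Om (K+4) w (([Qc, Qc * lin u] @ MP) @ [U1] @ [?y2])"
    by (rule Om_lin_mid, simp)
  also have "Om (K+4) w (([Qc, Qc * lin u] @ MP) @ [U2] @ [?y2]) = Om (K+4) w (([Qc, Qc * lin u] @ MP @ [U2]) @ [?y2])" by simp
  also have "\<dots> = Om (K+4) w (([Qc, Qc * lin u] @ MP @ [U2]) @ [U3 + smult (-?e) U2]) + ?h * Om (K+4) w (([Qc, Qc * lin u] @ MP @ [U2]) @ [U1])"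
    by (rule Om_lin_last, simp)
  also have "Om (K+4) w (([Qc, Qc * lin u] @ MP @ [U2]) @ [U3 + smult (-?e) U2]) = Om (K+4) w (([Qc, Qc * lin u] @ MP @ [U2]) @ [U3]) + (-?e) * Om (K+4) w (([Qc, Qc * lin u] @ MP @ [U2]) @ [U2])"
    by (rule Om_lin_last, simp)
  also have "Om (K+4) w (([Qc, Qc * lin u] @ MP) @ [U1] @ [?y2]) = Om (K+4) w (([Qc, Qc * lin u] @ MP @ [U1]) @ [?y2])" by simp
  also have "\<dots> = Om (K+4) w (([Qc, Qc * lin u] @ MP @ [U1]) @ [U3 + smult (-?e) U2]) + ?h * Om (K+4) w (([Qc, Qc * lin u] @ MP @ [U1]) @ [U1])"
    by (rule Om_lin_last, simp)
  also have "Om (K+4) w (([Qc, Qc * lin u] @ MP @ [U1]) @ [U3 + smult (-?e) U2]) = Om (K+4) w (([Qc, Qc * lin u] @ MP @ [U1]) @ [U3]) + (-?e) * Om (K+4) w (([Qc, Qc * lin u] @ MP @ [U1]) @ [U2])"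
    by (rule Om_lin_last, simp)
  also have "Om (K+4) w (([Qc, Qc * lin u] @ MP @ [U2]) @ [U2]) = 0"
    using Om_rep[of "[Qc, Qc * lin u] @ MP @ [U2]" "[]" "K+4" U2 w] by simp
  also have "Om (K+4) w (([Qc, Qc * lin u] @ MP @ [U1]) @ [U1]) = 0"
    using Om_rep[of "[Qc, Qc * lin u] @ MP @ [U1]" "[]" "K+4" U1 w] by simp
  also have "Om (K+4) w (([Qc, Qc * lin u] @ MP @ [U2]) @ [U1]) = - Xf U1 U2"
    using Om_swap[of "[Qc, Qc * lin u] @ MP" "[]" "K+4" w U2 U1] by (simp add: Xf_def)
  finally show ?thesis by (simp add: Xf_def algebra_simps power2_eq_square)
qed


definition "Qm x = poly Qc (- x)"

lemma ell_lin: "ell (P + smult c R) = ell P + c * ell R"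
  unfolding ell_def by (rule Om_lin, simp)

lemma ell_zero: "ell 0 = 0"
  unfolding ell_def by (rule Om_zero, simp)

lemma ell_smult: "ell (smult c R) = c * ell R"
  using ell_lin[of 0 c R] ell_zero by simp

lemma ell_DD: "ell (DD * [:a0, a1, a2:]) = 0"
proof -
  have e: "DD * [:a0, a1, a2:] = (smult a0 DD + smult a1 (DD * monom 1 1)) + smult a2 (DD * monom 1 2)"
    by (rule poly_ext_eq) (simp add: poly_monom algebra_simps power2_eq_square)
  have z0: "ell DD = 0" unfolding ell_def by (rule Om_rep, auto simp: CC_def)
  have z1: "ell (DD * monom 1 1) = 0" unfolding ell_def by (rule Om_rep, auto simp: CC_def)
  have z2: "ell (DD * monom 1 2) = 0" unfolding ell_def by (rule Om_rep, auto simp: CC_def)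
  show ?thesis unfolding e ell_lin ell_smult z0 z1 z2
    using ell_lin[of "smult a0 DD" a1 "DD * monom 1 1"] ell_smult[of a0 DD] z0 z1 by simp
qed

lemma ell_R1: "ell (Qc * lin u) = Qm v * ell (lin u)"
proof -
  have e: "Qc * lin u = DD * [:e2 - e1*v + v^2, e1 - v, 1:] + smult (Qm v) (lin u)"
    by (rule poly_ext_eq) (simp add: Qm_def Qc_def DD_def algebra_simps power2_eq_square power3_eq_cube)
  show ?thesis unfolding e ell_lin ell_DD by simp
qed

lemma ell_R2: "(u - v) * ell Qc + Qm u * ell (lin v) - Qm v * ell (lin u) = 0"
proof -
  have e: "smult (-(u - v)) Qc = (DD * [:-(u-v)*(e1-u-v), -(u-v), 0:] + smult (Qm u) (lin v)) + smult (- Qm v) (lin u)"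
    by (rule poly_ext_eq) (simp add: Qm_def Qc_def DD_def algebra_simps power2_eq_square power3_eq_cube)
  have "ell (smult (-(u - v)) Qc) = ell (DD * [:-(u-v)*(e1-u-v), -(u-v), 0:]) + Qm u * ell (lin v) + (- Qm v) * ell (lin u)"
    unfolding e ell_lin by simp
  hence "-(u - v) * ell Qc = Qm u * ell (lin v) - Qm v * ell (lin u)"
    unfolding ell_smult ell_DD by simp
  thus ?thesis by (simp add: algebra_simps)
qed

lemma Kf_lin: "Kf (P + smult c R) = Kf P + c * Kf R"
  unfolding Kf_def using Om_lin[of "[]" "MP @ [U1, U2, U3]" "K+4" w P c R] by simp

lemma c4_plucker: "Xf U2 U3 * Yf U1 - Xf U1 U3 * Yf U2 + Xf U1 U2 * Yf U3
   = Kf Qc * ell (Qc * lin u) - Kf (Qc * lin u) * ell Qc"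
proof -
  let ?s = "(-1::complex)^K"
  have s2: "?s * ?s = 1" by (simp add: power_mult_distrib[symmetric])
  have mv: "\<And>x. Om (K+4) w (CC @ MP @ [x]) = ?s * ell x"
  proof -
    fix x
    have "ell x = ?s * Om (K+4) w (CC @ MP @ [x])"
      unfolding ell_def using Om_move_end[of CC MP "K+4" w x] by simp
    hence "?s * ell x = (?s * ?s) * Om (K+4) w (CC @ MP @ [x])" by (simp add: mult.assoc)
    thus "Om (K+4) w (CC @ MP @ [x]) = ?s * ell x" using s2 by simp
  qed
  have P: "Kf (Qc * lin u) * Om (K+4) w (CC @ MP @ [Qc]) - Kf Qc * Om (K+4) w (CC @ MP @ [Qc * lin u])
     + ?s * (Xf U2 U3 * Yf U1 - Xf U1 U3 * Yf U2 + Xf U1 U2 * Yf U3) = 0"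
    using Om_plucker_split[of CC MP "K+4" "[Qc, Qc * lin u]" "[U1, U2, U3]" w]
    by (simp add: del_def numeral_3_eq_3 numeral_2_eq_2 lessThan_Suc Kf_def Xf_def Yf_def algebra_simps)
  hence "?s * (Kf (Qc * lin u) * ell Qc - Kf Qc * ell (Qc * lin u) + (Xf U2 U3 * Yf U1 - Xf U1 U3 * Yf U2 + Xf U1 U2 * Yf U3)) = 0"
    unfolding mv by (simp add: algebra_simps)
  hence "Kf (Qc * lin u) * ell Qc - Kf Qc * ell (Qc * lin u) + (Xf U2 U3 * Yf U1 - Xf U1 U3 * Yf U2 + Xf U1 U2 * Yf U3) = 0"
    using s2 by (metis mult_eq_0_iff one_neq_zero)
  thus ?thesis by (simp add: algebra_simps)
qed

lemma c4_main:
  "(u - v) * ((u^2 + u*v + v^2 - e1*(u+v) + e2) * Cas (K+4) w Qc [0..<K+4] * Cas (K+4) w DD [0..<K+4]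
      + (u + v - e1) * (Cas (K+4) w Qc ([0..<K+3] @ [K+4]) * Cas (K+4) w DD [0..<K+4] - Cas (K+4) w Qc [0..<K+4] * Cas (K+4) w DD ([0..<K+3] @ [K+4]))
      + Cas (K+4) w Qc ([0..<K+2] @ [K+3, K+4]) * Cas (K+4) w DD [0..<K+4]
      - Cas (K+4) w Qc ([0..<K+3] @ [K+4]) * Cas (K+4) w DD ([0..<K+3] @ [K+4])
      + Cas (K+4) w Qc [0..<K+4] * Cas (K+4) w DD ([0..<K+3] @ [K+5]))
   + Qm u * Cas (K+4) w (lin u * Qc) [0..<K+4] * Cas (K+4) w (lin v) [0..<K+4]
   - Qm v * Cas (K+4) w (lin v * Qc) [0..<K+4] * Cas (K+4) w (lin u) [0..<K+4] = 0"
proof -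
  have br: "(u^2 + u*v + v^2 - e1*(u+v) + e2) * Xf U1 U2 * Yf U1
      + (u + v - e1) * ((Xf U1 U3 - (u + v) * Xf U1 U2) * Yf U1 - Xf U1 U2 * (Yf U2 - e1 * Yf U1))
      + (Xf U2 U3 - (u + v) * Xf U1 U3 + u * v * Xf U1 U2) * Yf U1
      - (Xf U1 U3 - (u + v) * Xf U1 U2) * (Yf U2 - e1 * Yf U1)
      + Xf U1 U2 * (Yf U3 - e1 * Yf U2 + (e1^2 - e2) * Yf U1)
     = Xf U2 U3 * Yf U1 - Xf U1 U3 * Yf U2 + Xf U1 U2 * Yf U3"
    by (simp add: algebra_simps power2_eq_square)
  have kv: "Kf (Qc * lin v) = Kf (Qc * lin u) + (v - u) * Kf Qc"
  proof -
    have "Qc * lin v = Qc * lin u + smult (v - u) Qc" by (rule poly_ext_eq) (simp add: algebra_simps)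
    thus ?thesis by (simp add: Kf_lin)
  qed
  have fin: "(u - v) * (Kf Qc * ell (Qc * lin u) - Kf (Qc * lin u) * ell Qc)
     + Qm u * Kf (Qc * lin u) * (- ell (lin v)) - Qm v * Kf (Qc * lin v) * (- ell (lin u)) = 0"
  proof -
    have "(u - v) * (Kf Qc * ell (Qc * lin u) - Kf (Qc * lin u) * ell Qc)
     + Qm u * Kf (Qc * lin u) * (- ell (lin v)) - Qm v * Kf (Qc * lin v) * (- ell (lin u))
     = (u - v) * Kf Qc * (ell (Qc * lin u) - Qm v * ell (lin u))
       - Kf (Qc * lin u) * ((u - v) * ell Qc + Qm u * ell (lin v) - Qm v * ell (lin u))"
      unfolding kv by (simp add: algebra_simps)
    also have "\<dots> = 0" unfolding ell_R1 ell_R2 by simp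
    finally show ?thesis .
  qed
  show ?thesis
    unfolding c4_fZ c4_F c4_gZ c4_G c4_H c4_sZ c4_fpZ c4_fqZ c4_fp c4_fq
    using br c4_plucker fin by (simp add: mult_ac)
qed

end


primrec wq :: "(nat \<Rightarrow> nat \<Rightarrow> complex) \<Rightarrow> complex \<Rightarrow> nat \<Rightarrow> nat \<Rightarrow> complex" where
  "wq w c 0 i = 0"
| "wq w c (Suc l) i = w l i + c * wq w c l i"

definition wp :: "(nat \<Rightarrow> nat \<Rightarrow> complex) \<Rightarrow> complex \<Rightarrow> nat \<Rightarrow> nat \<Rightarrow> nat \<Rightarrow> complex" where
  "wp w c N l i = (if i < N then wq w c l i else c ^ l)"

definition hp :: "complex \<Rightarrow> nat \<Rightarrow> nat \<Rightarrow> complex poly" where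
  "hp c a b = (\<Sum>t\<in>{a..<b}. smult (c ^ (b - 1 - t)) (monom 1 t))"

lemma poly_hp: "poly (hp c a b) x = (\<Sum>t\<in>{a..<b}. c ^ (b - 1 - t) * x ^ t)"
  unfolding hp_def by (simp add: poly_sum poly_monom)

lemma hp_sum_id:
  assumes "a \<le> b"
  shows "(x - c) * (\<Sum>t\<in>{a..<b}. c ^ (b - 1 - t) * x ^ t) = x ^ b - c ^ (b - a) * (x::complex) ^ a"
  using assms
proof (induction b rule: dec_induct)
  case base thus ?case by simp
next
  case (step b)
  let ?S = "\<Sum>t\<in>{a..<b}. c ^ (b - 1 - t) * x ^ t"
  have "(\<Sum>t\<in>{a..<Suc b}. c ^ (Suc b - 1 - t) * x ^ t) = (\<Sum>t\<in>{a..<b}. c ^ (Suc b - 1 - t) * x ^ t) + x ^ b"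
    using step(1) by simp
  also have "(\<Sum>t\<in>{a..<b}. c ^ (Suc b - 1 - t) * x ^ t) = c * ?S"
    unfolding sum_distrib_left
  proof (rule sum.cong[OF refl])
    fix t assume "t \<in> {a..<b}"
    hence "Suc b - 1 - t = Suc (b - 1 - t)" by auto
    thus "c ^ (Suc b - 1 - t) * x ^ t = c * (c ^ (b - 1 - t) * x ^ t)" by simp
  qed
  finally have e: "(\<Sum>t\<in>{a..<Suc b}. c ^ (Suc b - 1 - t) * x ^ t) = c * ?S + x ^ b" .
  have "(x - c) * (c * ?S + x ^ b) = c * ((x - c) * ?S) + (x - c) * x ^ b" by (simp add: algebra_simps)
  also have "\<dots> = c * (x ^ b - c ^ (b - a) * x ^ a) + (x - c) * x ^ b" by (simp only: step(3))
  also have "\<dots> = x ^ Suc b - c ^ Suc (b - a) * x ^ a" by (simp add: algebra_simps)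
  also have "Suc (b - a) = Suc b - a" using step(1) by auto
  finally show ?case unfolding e .
qed

lemma hp_id:
  assumes "a \<le> b"
  shows "lin (-c) * hp c a b = monom 1 b - smult (c ^ (b - a)) (monom 1 a)"
proof (rule poly_ext_eq)
  fix x
  have "poly (lin (-c) * hp c a b) x = (x - c) * (\<Sum>t\<in>{a..<b}. c ^ (b - 1 - t) * x ^ t)"
    by (simp add: poly_hp)
  also have "\<dots> = x ^ b - c ^ (b - a) * x ^ a" by (rule hp_sum_id[OF assms])
  finally show "poly (lin (-c) * hp c a b) x = poly (monom 1 b - smult (c ^ (b - a)) (monom 1 a)) x"
    by (simp add: poly_monom)
qed

lemma ev_wp_row: "i < N \<Longrightarrow> ev (wp w c N) P i = ev (wq w c) P i"
  unfolding ev_def wp_def by simp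

lemma ev_wp_last: "ev (wp w c N) P N = poly P c"
  unfolding ev_def wp_def by (simp add: poly_altdef mult.commute)

lemma ev_wq_shift: "ev (wq w c) (lin (-c) * R) i = ev w R i"
proof -
  have d: "degree R < Suc (degree R)" by simp
  have "ev (wq w c) (lin (-c) * R) i = ev (wq w c) (R * lin (-c)) i" by (simp add: mult.commute)
  also have "\<dots> = (\<Sum>t<Suc (degree R). coeff R t * ev (wq w c) (lin (-c) * monom 1 t) i)"
    by (subst mult.commute, rule ev_mult_expand[OF d])
  also have "\<dots> = (\<Sum>t<Suc (degree R). coeff R t * w t i)"
  proof (rule sum.cong[OF refl])
    fix t
    have "lin (-c) * monom 1 t = monom 1 (Suc t) + smult (-c) (monom (1::complex) t)"
      by (rule poly_ext_eq) (simp add: poly_monom algebra_simps)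
    hence "ev (wq w c) (lin (-c) * monom 1 t) i = ev (wq w c) (monom 1 (Suc t)) i + (-c) * ev (wq w c) (monom 1 t) i"
      by (simp only: ev_add ev_smult)
    thus "coeff R t * ev (wq w c) (lin (-c) * monom 1 t) i = coeff R t * w t i"
      by (simp add: ev_monom)
  qed
  also have "\<dots> = ev w R i" by (rule ev_bound[OF d, symmetric])
  finally show ?thesis .
qed

lemma pad_main:
  assumes sorted: "\<And>j. j < N \<Longrightarrow> ls!j < ls!(Suc j)" and len: "length ls = Suc N"
  shows "Cas (Suc N) (wp w c N) D ls = (-1)^N * (c^(ls!0) * poly D c) * Om N w (map (\<lambda>j. hp c (ls!j) (ls!(Suc j)) * D) [0..<N])"
proof -
  let ?W = "wp w c N"
  let ?Ps = "map (\<lambda>l. D * monom 1 l) ls"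
  let ?Qs = "(D * monom 1 (ls!0)) # map (\<lambda>j. (lin (-c) * hp c (ls!j) (ls!(Suc j))) * D) [0..<N]"
  have "Cas (Suc N) ?W D ls = Om (Suc N) ?W ?Ps" by (simp add: Cas_Om len)
  also have "\<dots> = Om (Suc N) ?W ?Qs"
  proof (rule Om_unitri[symmetric, where U="\<lambda>t j. if Suc t = j then - (c ^ (ls!j - ls!t)) else 0"])
    fix j assume j: "j < Suc N"
    show "?Qs ! j = ?Ps ! j + (\<Sum>t<j. smult (if Suc t = j then - (c ^ (ls!j - ls!t)) else 0) (?Ps ! t))"
    proof (cases j)
      case 0 thus ?thesis using len by simp
    next
      case (Suc j')
      have j': "j' < N" using j Suc by simp
      have le: "ls!j' \<le> ls!j" using sorted[OF j'] Suc by simp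
      have "?Qs ! j = (lin (-c) * hp c (ls!j') (ls!j)) * D" using Suc j' by simp
      also have "\<dots> = (monom 1 (ls!j) - smult (c ^ (ls!j - ls!j')) (monom 1 (ls!j'))) * D"
        by (simp only: hp_id[OF le])
      also have "\<dots> = ?Ps ! j + smult (- (c ^ (ls!j - ls!j'))) (?Ps ! j')"
        using j Suc len by (simp add: algebra_simps)
      also have "smult (- (c ^ (ls!j - ls!j'))) (?Ps ! j') = (\<Sum>t<j. smult (if Suc t = j then - (c ^ (ls!j - ls!t)) else 0) (?Ps ! t))"
      proof -
        have "(\<Sum>t<j. smult (if Suc t = j then - (c ^ (ls!j - ls!t)) else 0) (?Ps ! t))
            = (\<Sum>t\<in>{j'}. smult (- (c ^ (ls!j - ls!t))) (?Ps ! t))"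
          by (rule sum.mono_neutral_cong_right) (use Suc in auto)
        thus ?thesis by simp
      qed
      finally show ?thesis .
    qed
  qed (use len in auto)
  also have "\<dots> = Dv (Suc N) (map (ev ?W) ?Qs)" by (simp add: Om_def)
  also have "\<dots> = (-1)^N * ((map (ev ?W) ?Qs)!0) N * Dv N (tl (map (ev ?W) ?Qs))"
  proof (rule Dv_lastrow)
    fix j assume "0 < j" "j \<le> N"
    then obtain j' where j': "j = Suc j'" "j' < N" by (cases j) auto
    show "(map (ev ?W) ?Qs ! j) N = 0" using j' by (simp add: ev_wp_last)
  qed simp
  also have "((map (ev ?W) ?Qs)!0) N = c^(ls!0) * poly D c" by (simp add: ev_wp_last poly_monom)
  also have "Dv N (tl (map (ev ?W) ?Qs)) = Om N w (map (\<lambda>j. hp c (ls!j) (ls!(Suc j)) * D) [0..<N])"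
    unfolding Om_def by (rule Dv_cong) (simp add: ev_wp_row ev_wq_shift mult.assoc)
  finally show ?thesis by simp
qed


definition "fS N = [0..<N]"
definition "gS N = [0..<N-1] @ [N]"
definition "hS N = [0..<N-1] @ [N+1]"
definition "sS N = [0..<N-2] @ [N-1, N]"

lemma hp1: "hp c a (Suc a) = monom 1 a"
  unfolding hp_def by simp

lemma hp2: "hp c a (Suc (Suc a)) = monom 1 (Suc a) + smult c (monom 1 a)"
proof -
  have "{a..<Suc (Suc a)} = {a, Suc a}" by auto
  thus ?thesis unfolding hp_def by (simp add: add.commute)
qed

lemma hp3: "hp c a (Suc (Suc (Suc a))) = monom 1 (Suc (Suc a)) + smult c (monom 1 (Suc a)) + smult (c^2) (monom 1 a)"
proof -
  have "{a..<Suc (Suc (Suc a))} = {a, Suc a, Suc (Suc a)}" by auto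
  thus ?thesis unfolding hp_def by (simp add: add_ac power2_eq_square)
qed

lemma pad_f: "Cas (Suc N) (wp w c N) D (fS (Suc N)) = (-1)^N * poly D c * Cas N w D (fS N)"
proof -
  have "Cas (Suc N) (wp w c N) D [0..<Suc N] = (-1)^N * (c^([0..<Suc N]!0) * poly D c) *
      Om N w (map (\<lambda>j. hp c ([0..<Suc N]!j) ([0..<Suc N]!(Suc j)) * D) [0..<N])"
    by (rule pad_main) (auto simp del: upt_Suc)
  also have "map (\<lambda>j. hp c ([0..<Suc N]!j) ([0..<Suc N]!(Suc j)) * D) [0..<N] = map (\<lambda>l. monom 1 l * D) [0..<N]"
    by (rule map_cong[OF refl]) (simp add: hp1 nth_upt del: upt_Suc)
  also have "[0..<Suc N] ! 0 = 0" by (simp del: upt_Suc)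
  finally show ?thesis by (simp add: fS_def Cas_def del: upt_Suc)
qed

lemma pad_g:
  assumes "1 \<le> N"
  shows "Cas (Suc N) (wp w c N) D (gS (Suc N)) = (-1)^N * poly D c * (Cas N w D (gS N) + c * Cas N w D (fS N))"
proof -
  obtain M where M: "N = Suc M" using assms by (cases N) auto
  let ?ls = "[0..<N] @ [Suc N]"
  have ls: "\<And>j. j < N \<Longrightarrow> ?ls ! j = j" "?ls ! N = Suc N" by (auto simp: nth_append)
  have "Cas (Suc N) (wp w c N) D ?ls = (-1)^N * (c^(?ls!0) * poly D c) *
      Om N w (map (\<lambda>j. hp c (?ls!j) (?ls!(Suc j)) * D) [0..<N])"
    by (rule pad_main) (auto simp: nth_append)
  also have "map (\<lambda>j. hp c (?ls!j) (?ls!(Suc j)) * D) [0..<N] =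
      map (\<lambda>l. monom 1 l * D) [0..<M] @ [monom 1 N * D + smult c (monom 1 M * D)]"
  proof (rule nth_equalityI)
    fix j assume "j < length (map (\<lambda>j. hp c (?ls!j) (?ls!(Suc j)) * D) [0..<N])"
    hence j: "j < N" by simp
    show "map (\<lambda>j. hp c (?ls!j) (?ls!(Suc j)) * D) [0..<N] ! j =
      (map (\<lambda>l. monom 1 l * D) [0..<M] @ [monom 1 N * D + smult c (monom 1 M * D)]) ! j"
    proof (cases "j < M")
      case True
      hence "Suc j < N" using M by simp
      thus ?thesis using True j M by (simp add: nth_append hp1 del: upt_Suc)
    next
      case False
      hence "j = M" using j M by simp
      thus ?thesis using M by (simp add: nth_append hp2 algebra_simps)
    qed
  qed (use M in simp)
  also have "Om N w (map (\<lambda>l. monom 1 l * D) [0..<M] @ [monom 1 N * D + smult c (monom 1 M * D)]) =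
     Om N w (map (\<lambda>l. monom 1 l * D) [0..<M] @ [monom 1 N * D]) + c * Om N w (map (\<lambda>l. monom 1 l * D) [0..<M] @ [monom 1 M * D])"
    by (rule Om_lin_last) (simp add: M)
  also have "?ls ! 0 = 0" using M by (simp add: nth_append)
  finally show ?thesis using M by (simp add: gS_def fS_def Cas_def)
qed

lemma pad_h:
  assumes "1 \<le> N"
  shows "Cas (Suc N) (wp w c N) D (hS (Suc N)) = (-1)^N * poly D c * (Cas N w D (hS N) + c * Cas N w D (gS N) + c^2 * Cas N w D (fS N))"
proof -
  obtain M where M: "N = Suc M" using assms by (cases N) auto
  let ?ls = "[0..<N] @ [Suc (Suc N)]"
  have "Cas (Suc N) (wp w c N) D ?ls = (-1)^N * (c^(?ls!0) * poly D c) *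
      Om N w (map (\<lambda>j. hp c (?ls!j) (?ls!(Suc j)) * D) [0..<N])"
    by (rule pad_main) (auto simp: nth_append)
  also have "map (\<lambda>j. hp c (?ls!j) (?ls!(Suc j)) * D) [0..<N] =
      map (\<lambda>l. monom 1 l * D) [0..<M] @ [(monom 1 (Suc N) * D + smult c (monom 1 N * D)) + smult (c^2) (monom 1 M * D)]"
  proof (rule nth_equalityI)
    fix j assume "j < length (map (\<lambda>j. hp c (?ls!j) (?ls!(Suc j)) * D) [0..<N])"
    hence j: "j < N" by simp
    show "map (\<lambda>j. hp c (?ls!j) (?ls!(Suc j)) * D) [0..<N] ! j =
      (map (\<lambda>l. monom 1 l * D) [0..<M] @ [(monom 1 (Suc N) * D + smult c (monom 1 N * D)) + smult (c^2) (monom 1 M * D)]) ! j"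
    proof (cases "j < M")
      case True
      hence "Suc j < N" using M by simp
      thus ?thesis using True j M by (simp add: nth_append hp1 del: upt_Suc)
    next
      case False
      hence "j = M" using j M by simp
      thus ?thesis using M by (simp add: nth_append hp3 algebra_simps)
    qed
  qed (use M in simp)
  also have "Om N w (map (\<lambda>l. monom 1 l * D) [0..<M] @ [(monom 1 (Suc N) * D + smult c (monom 1 N * D)) + smult (c^2) (monom 1 M * D)]) =
     Om N w (map (\<lambda>l. monom 1 l * D) [0..<M] @ [monom 1 (Suc N) * D + smult c (monom 1 N * D)]) + c^2 * Om N w (map (\<lambda>l. monom 1 l * D) [0..<M] @ [monom 1 M * D])"
    by (rule Om_lin_last) (simp add: M)
  also have "Om N w (map (\<lambda>l. monom 1 l * D) [0..<M] @ [monom 1 (Suc N) * D + smult c (monom 1 N * D)]) =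
     Om N w (map (\<lambda>l. monom 1 l * D) [0..<M] @ [monom 1 (Suc N) * D]) + c * Om N w (map (\<lambda>l. monom 1 l * D) [0..<M] @ [monom 1 N * D])"
    by (rule Om_lin_last) (simp add: M)
  also have "?ls ! 0 = 0" using M by (simp add: nth_append)
  finally show ?thesis using M by (simp add: hS_def gS_def fS_def Cas_def algebra_simps)
qed

lemma pad_s:
  assumes "1 \<le> N"
  shows "Cas (Suc N) (wp w c N) D (sS (Suc N)) = (-1)^N * poly D c * (Cas N w D (sS N) + c * Cas N w D (gS N))"
proof (cases "N = 1")
  case True
  have A: "Cas (Suc 1) (wp w c 1) D [1, 2] = (-1)^1 * (c^([1::nat,2]!0) * poly D c) *
      Om 1 w (map (\<lambda>j. hp c ([1,2]!j) ([1,2]!(Suc j)) * D) [0..<1])"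
    by (rule pad_main) auto
  have h: "hp c 1 2 = monom 1 1" using hp1[of c 1] by (simp add: numeral_2_eq_2)
  have h': "hp c (Suc 0) 2 = monom 1 (Suc 0)" using h by simp
  have m: "map (\<lambda>j. hp c ([1::nat,2]!j) ([1,2]!(Suc j)) * D) [0..<1] = [monom 1 1 * D]"
    by (simp add: h')
  have sS1: "sS (Suc 1) = [1, 2]" by (simp add: sS_def)
  have g1: "Cas 1 w D (gS 1) = Om 1 w [monom 1 1 * D]" by (simp add: gS_def Cas_def)
  have s1: "Cas 1 w D (sS 1) = 0" by (simp add: sS_def Cas_def)
  show ?thesis unfolding True sS1 A m g1 s1 by simp
next
  case False
  then obtain M where M: "N = Suc (Suc M)" using assms by (cases N; cases "N - 1") auto
  let ?ls = "[0..<Suc M] @ [N, Suc N]"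
  have "Cas (Suc N) (wp w c N) D ?ls = (-1)^N * (c^(?ls!0) * poly D c) *
      Om N w (map (\<lambda>j. hp c (?ls!j) (?ls!(Suc j)) * D) [0..<N])"
    by (rule pad_main) (use M in \<open>auto simp: nth_append less_Suc_eq\<close>)
  also have "map (\<lambda>j. hp c (?ls!j) (?ls!(Suc j)) * D) [0..<N] =
      map (\<lambda>l. monom 1 l * D) [0..<M] @ [monom 1 (Suc M) * D + smult c (monom 1 M * D)] @ [monom 1 N * D]"
  proof (rule nth_equalityI)
    fix j assume "j < length (map (\<lambda>j. hp c (?ls!j) (?ls!(Suc j)) * D) [0..<N])"
    hence j: "j < N" by simp
    show "map (\<lambda>j. hp c (?ls!j) (?ls!(Suc j)) * D) [0..<N] ! j =
      (map (\<lambda>l. monom 1 l * D) [0..<M] @ [monom 1 (Suc M) * D + smult c (monom 1 M * D)] @ [monom 1 N * D]) ! j"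
    proof (cases "j < M")
      case True
      hence "Suc j < N" using M by simp
      thus ?thesis using True j M by (simp add: nth_append hp1 del: upt_Suc)
    next
      case False
      hence "j = M \<or> j = Suc M" using j M by auto
      thus ?thesis using M by (auto simp: nth_append hp1 hp2 algebra_simps)
    qed
  qed (use M in simp)
  also have "Om N w (map (\<lambda>l. monom 1 l * D) [0..<M] @ [monom 1 (Suc M) * D + smult c (monom 1 M * D)] @ [monom 1 N * D]) =
     Om N w (map (\<lambda>l. monom 1 l * D) [0..<M] @ [monom 1 (Suc M) * D] @ [monom 1 N * D]) + c * Om N w (map (\<lambda>l. monom 1 l * D) [0..<M] @ [monom 1 M * D] @ [monom 1 N * D])"
    by (rule Om_lin) (simp add: M)
  also have "?ls ! 0 = 0" using M by (simp add: nth_append)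
  finally show ?thesis using M by (simp add: sS_def gS_def Cas_def)
qed


lemma exists_c: "(P::complex poly) \<noteq> 0 \<Longrightarrow> \<exists>c. poly P c \<noteq> 0"
  using poly_all_0_iff_0 by blast

lemma mon_nz: "mon P k \<Longrightarrow> P \<noteq> 0" unfolding mon_def by auto

lemma sgn_sq: "((-1::complex)^N) * ((-1)^N) = 1" by (simp add: power_mult_distrib[symmetric])

lemma fS_K2: "fS (K+2) = [0..<K+2]" by (simp add: fS_def)
lemma gS_K2: "gS (K+2) = [0..<K+1] @ [K+2]" by (simp add: gS_def)
lemma hS_K2: "hS (K+2) = [0..<K+1] @ [K+3]" by (simp add: hS_def)
lemma sS_K2: "sS (K+2) = [0..<K+2-2] @ [K+2-1, K+2]" by (simp add: sS_def)

definition SQe :: "nat \<Rightarrow> (nat \<Rightarrow> nat \<Rightarrow> complex) \<Rightarrow> complex \<Rightarrow> complex \<Rightarrow> complex" where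
  "SQe N w u v = (u - v) * (Cas N w (lin u) (fS N) * Cas N w (lin v) (fS N) - Cas N w 1 (fS N) * Cas N w (lin u * lin v) (fS N))
     + Cas N w (lin u) (fS N) * Cas N w (lin v) (gS N) - Cas N w (lin v) (fS N) * Cas N w (lin u) (gS N)"

lemma SQe_large: "2 \<le> N \<Longrightarrow> SQe N w u v = 0"
proof -
  assume "2 \<le> N"
  then obtain K where K: "N = K + 2" by (metis add.commute le_add_diff_inverse)
  show ?thesis unfolding SQe_def K fS_K2 gS_K2 by (rule sq_main)
qed

lemma SQe_pad: "1 \<le> N \<Longrightarrow> SQe (Suc N) (wp w c N) u v = ((c + u) * (c + v)) * SQe N w u v"
  unfolding SQe_def pad_f pad_g
  using sgn_sq[of N] by (simp add: algebra_simps)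

lemma SQe_all: "1 \<le> N \<Longrightarrow> SQe N w u v = 0"
proof (cases "2 \<le> N")
  case True thus ?thesis by (rule SQe_large)
next
  case False
  assume N1: "1 \<le> N"
  hence N: "N = 1" using False by simp
  obtain c where c: "poly (lin u * lin v) c \<noteq> 0"
    using exists_c[OF mon_nz[OF mon2]] by blast
  have "SQe (Suc N) (wp w c N) u v = ((c + u) * (c + v)) * SQe N w u v" by (rule SQe_pad[OF N1])
  moreover have "SQe (Suc N) (wp w c N) u v = 0" by (rule SQe_large, simp add: N)
  ultimately show ?thesis using c by (simp add: add.commute)
qed


definition SQHe :: "nat \<Rightarrow> (nat \<Rightarrow> nat \<Rightarrow> complex) \<Rightarrow> complex \<Rightarrow> complex \<Rightarrow> complex" where
  "SQHe N w u v = Cas N w (lin u) (fS N) * (v^2 * Cas N w (lin v) (fS N) - v * Cas N w (lin v) (gS N) + Cas N w (lin v) (hS N))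
   + u * Cas N w (lin u) (fS N) * (Cas N w (lin v) (gS N) - v * Cas N w (lin v) (fS N))
   - (u - v) * Cas N w 1 (fS N) * (Cas N w (lin u * lin v) (gS N) - v * Cas N w (lin u * lin v) (fS N))
   - Cas N w (lin v) (fS N) * Cas N w (lin u) (hS N)"

lemma SQHe_large: "2 \<le> N \<Longrightarrow> SQHe N w u v = 0"
proof -
  assume "2 \<le> N"
  then obtain K where K: "N = K + 2" by (metis add.commute le_add_diff_inverse)
  show ?thesis unfolding SQHe_def K fS_K2 gS_K2 hS_K2 by (rule sq_h_main)
qed

lemma SQHe_pad: "1 \<le> N \<Longrightarrow> SQHe (Suc N) (wp w c N) u v = ((c + u) * (c + v)) * (SQHe N w u v + c * SQe N w u v)"
  unfolding SQHe_def SQe_def pad_f pad_g pad_h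
  using sgn_sq[of N] by (simp add: algebra_simps power2_eq_square)

lemma SQHe_all: "1 \<le> N \<Longrightarrow> SQHe N w u v = 0"
proof (cases "2 \<le> N")
  case True thus ?thesis by (rule SQHe_large)
next
  case False
  assume N1: "1 \<le> N"
  hence N: "N = 1" using False by simp
  obtain c where c: "poly (lin u * lin v) c \<noteq> 0"
    using exists_c[OF mon_nz[OF mon2]] by blast
  have "SQHe (Suc N) (wp w c N) u v = ((c + u) * (c + v)) * (SQHe N w u v + c * SQe N w u v)" by (rule SQHe_pad[OF N1])
  moreover have "SQHe (Suc N) (wp w c N) u v = 0" by (rule SQHe_large, simp add: N)
  moreover have "SQe N w u v = 0" by (rule SQe_all[OF N1])
  ultimately show ?thesis using c by (simp add: add.commute)
qed

definition LNe :: "nat \<Rightarrow> (nat \<Rightarrow> nat \<Rightarrow> complex) \<Rightarrow> complex \<Rightarrow> complex" where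
  "LNe N w u = Cas N w (lin u) (fS N) * (u * Cas N w 1 (gS N) + Cas N w 1 (hS N))
   - Cas N w (lin u) (gS N) * (u * Cas N w 1 (fS N) + Cas N w 1 (gS N))
   + Cas N w 1 (fS N) * Cas N w (lin u) (sS N)"

lemma LNe_large: "2 \<le> N \<Longrightarrow> LNe N w u = 0"
proof -
  assume "2 \<le> N"
  then obtain K where K: "N = K + 2" by (metis add.commute le_add_diff_inverse)
  show ?thesis unfolding LNe_def K fS_K2 gS_K2 hS_K2 sS_K2 by (rule ln_main)
qed

lemma LNe_pad: "1 \<le> N \<Longrightarrow> LNe (Suc N) (wp w c N) u = (c + u) * LNe N w u"
  unfolding LNe_def pad_f pad_g pad_h pad_s
  using sgn_sq[of N] by (simp add: algebra_simps power2_eq_square)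

lemma LNe_all: "1 \<le> N \<Longrightarrow> LNe N w u = 0"
proof (cases "2 \<le> N")
  case True thus ?thesis by (rule LNe_large)
next
  case False
  assume N1: "1 \<le> N"
  hence N: "N = 1" using False by simp
  obtain c where c: "poly (lin u) c \<noteq> 0"
    using exists_c[OF mon_nz[OF mon_linp]] by blast
  have "LNe (Suc N) (wp w c N) u = (c + u) * LNe N w u" by (rule LNe_pad[OF N1])
  moreover have "LNe (Suc N) (wp w c N) u = 0" by (rule LNe_large, simp add: N)
  ultimately show ?thesis using c by (simp add: add.commute)
qed

definition C4e :: "nat \<Rightarrow> (nat \<Rightarrow> nat \<Rightarrow> complex) \<Rightarrow> complex \<Rightarrow> complex \<Rightarrow> complex \<Rightarrow> complex \<Rightarrow> complex \<Rightarrow> complex" where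
  "C4e N w u v e1 e2 e3 = (u - v) * ((u^2 + u*v + v^2 - e1*(u+v) + e2) * Cas N w (Qc e1 e2 e3) (fS N) * Cas N w (DD u v) (fS N)
      + (u + v - e1) * (Cas N w (Qc e1 e2 e3) (gS N) * Cas N w (DD u v) (fS N) - Cas N w (Qc e1 e2 e3) (fS N) * Cas N w (DD u v) (gS N))
      + Cas N w (Qc e1 e2 e3) (sS N) * Cas N w (DD u v) (fS N)
      - Cas N w (Qc e1 e2 e3) (gS N) * Cas N w (DD u v) (gS N)
      + Cas N w (Qc e1 e2 e3) (fS N) * Cas N w (DD u v) (hS N))
   + Qm e1 e2 e3 u * Cas N w (lin u * Qc e1 e2 e3) (fS N) * Cas N w (lin v) (fS N)
   - Qm e1 e2 e3 v * Cas N w (lin v * Qc e1 e2 e3) (fS N) * Cas N w (lin u) (fS N)"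

lemma C4e_large: "4 \<le> N \<Longrightarrow> C4e N w u v e1 e2 e3 = 0"
proof -
  assume "4 \<le> N"
  then obtain K where K: "N = K + 4" by (metis add.commute le_add_diff_inverse)
  have f: "fS (K+4) = [0..<K+4]" by (simp add: fS_def)
  have e3: "K + 4 - 1 = K + 3" by simp
  have g: "gS (K+4) = [0..<K+3] @ [K+4]" unfolding gS_def e3 ..
  have h: "hS (K+4) = [0..<K+3] @ [K+5]" unfolding hS_def e3 by simp
  have s: "sS (K+4) = [0..<K+2] @ [K+3, K+4]" by (simp add: sS_def)
  show ?thesis unfolding C4e_def K f g h s by (rule c4_main)
qed

lemma C4e_pad: "1 \<le> N \<Longrightarrow> C4e (Suc N) (wp w c N) u v e1 e2 e3 = (poly (Qc e1 e2 e3) c * ((c + u) * (c + v))) * C4e N w u v e1 e2 e3"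
  unfolding C4e_def pad_f pad_g pad_h pad_s
  using sgn_sq[of N] by (simp add: DD_def algebra_simps power2_eq_square)

lemma C4e_all: "1 \<le> N \<Longrightarrow> C4e N w u v e1 e2 e3 = 0"
proof (induction "4 - N" arbitrary: N w rule: less_induct)
  case less
  show ?case
  proof (cases "4 \<le> N")
    case True thus ?thesis by (rule C4e_large)
  next
    case False
    have nz: "Qc e1 e2 e3 * (lin u * lin v) \<noteq> 0"
      using mon_nz[OF mon_mult[OF mon_Qc' mon2]] .
    obtain c where c: "poly (Qc e1 e2 e3 * (lin u * lin v)) c \<noteq> 0"
      using exists_c[OF nz] by blast
    have "C4e (Suc N) (wp w c N) u v e1 e2 e3 = 0"
      by (rule less.hyps) (use False less.prems in auto)
    moreover have "C4e (Suc N) (wp w c N) u v e1 e2 e3 = (poly (Qc e1 e2 e3) c * ((c + u) * (c + v))) * C4e N w u v e1 e2 e3"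
      by (rule C4e_pad[OF less.prems])
    ultimately show ?thesis using c by (simp add: add.commute)
  qed
qed



definition gq :: "complex \<Rightarrow> complex \<Rightarrow> complex \<Rightarrow> complex \<Rightarrow> complex" where
  "gq a1 a2 a3 y = y^4 + a3 * y^3 + a2 * y^2 + a1 * y"

lemma G_gq: "G a1 a2 a3 x y = gq a1 a2 a3 x - gq a1 a2 a3 y"
  unfolding G_def gq_def by (simp add: algebra_simps)

lemma psi_shift:
  assumes nz: "\<forall>j\<in>{1..4}. \<omega> j s \<noteq> p \<and> \<omega> j s \<noteq> q \<and> \<omega> j s \<noteq> b"
  shows "psi \<rho> \<omega> p q a b s (n + int i1) (m + int j1) \<alpha> (\<beta> + int k1) l =
    (\<Sum>j\<in>{1..4}. \<rho> j s * ((p - \<omega> j s) powi n * (q - \<omega> j s) powi m * (a - \<omega> j s) powi \<alpha> * (b - \<omega> j s) powi \<beta>)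
        * poly (monom 1 l * (lin p ^ i1 * lin q ^ j1 * lin b ^ k1)) (- \<omega> j s))"
  unfolding psi_def
proof (rule sum.cong[OF refl])
  fix j assume j: "j \<in> {1..4::nat}"
  have np: "p - \<omega> j s \<noteq> 0" and nq: "q - \<omega> j s \<noteq> 0" and nb: "b - \<omega> j s \<noteq> 0" using nz j by auto
  have e1: "(p - \<omega> j s) powi (n + int i1) = (p - \<omega> j s) powi n * (p - \<omega> j s) ^ i1"
    using power_int_add[of "p - \<omega> j s" n "int i1"] np by simp
  have e2: "(q - \<omega> j s) powi (m + int j1) = (q - \<omega> j s) powi m * (q - \<omega> j s) ^ j1"
    using power_int_add[of "q - \<omega> j s" m "int j1"] nq by simp
  have e3: "(b - \<omega> j s) powi (\<beta> + int k1) = (b - \<omega> j s) powi \<beta> * (b - \<omega> j s) ^ k1"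
    using power_int_add[of "b - \<omega> j s" \<beta> "int k1"] nb by simp
  show "\<rho> j s * (- \<omega> j s) ^ l * (p - \<omega> j s) powi (n + int i1) * (q - \<omega> j s) powi (m + int j1) *
       (a - \<omega> j s) powi \<alpha> * (b - \<omega> j s) powi (\<beta> + int k1) =
    \<rho> j s * ((p - \<omega> j s) powi n * (q - \<omega> j s) powi m * (a - \<omega> j s) powi \<alpha> * (b - \<omega> j s) powi \<beta>) *
    poly (monom 1 l * (lin p ^ i1 * lin q ^ j1 * lin b ^ k1)) (- \<omega> j s)"
    unfolding e1 e2 e3 by (simp add: poly_monom algebra_simps)
qed

lemma ev_W:
  "ev (\<lambda>l i. psi \<rho> \<omega> p q a b (i + 1) n m \<alpha> \<beta> l) P i =
    (\<Sum>j\<in>{1..4}. \<rho> j (i+1) * ((p - \<omega> j (i+1)) powi n * (q - \<omega> j (i+1)) powi m * (a - \<omega> j (i+1)) powi \<alpha> * (b - \<omega> j (i+1)) powi \<beta>)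
        * poly P (- \<omega> j (i+1)))"
proof -
  let ?L = "\<lambda>j. \<rho> j (i+1) * ((p - \<omega> j (i+1)) powi n * (q - \<omega> j (i+1)) powi m * (a - \<omega> j (i+1)) powi \<alpha> * (b - \<omega> j (i+1)) powi \<beta>)"
  have "ev (\<lambda>l i. psi \<rho> \<omega> p q a b (i + 1) n m \<alpha> \<beta> l) P i = (\<Sum>k\<le>degree P. coeff P k * (\<Sum>j\<in>{1..4}. ?L j * (- \<omega> j (i+1)) ^ k))"
    unfolding ev_def psi_def by (simp add: mult_ac)
  also have "\<dots> = (\<Sum>j\<in>{1..4}. ?L j * (\<Sum>k\<le>degree P. coeff P k * (- \<omega> j (i+1)) ^ k))"
    by (simp add: sum_distrib_left sum_distrib_right mult_ac sum.swap[of _ "{..degree P}"])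
  also have "\<dots> = (\<Sum>j\<in>{1..4}. ?L j * poly P (- \<omega> j (i+1)))"
    by (simp add: poly_altdef)
  finally show ?thesis .
qed

lemma casor_Cas:
  assumes nz: "\<forall>s\<in>{1..N}. \<forall>j\<in>{1..4}. \<omega> j s \<noteq> p \<and> \<omega> j s \<noteq> q \<and> \<omega> j s \<noteq> b"
  shows "casor N \<rho> \<omega> p q a b (n + int i1) (m + int j1) \<alpha> (\<beta> + int k1) ls =
     Cas N (\<lambda>l i. psi \<rho> \<omega> p q a b (i + 1) n m \<alpha> \<beta> l) (lin p ^ i1 * lin q ^ j1 * lin b ^ k1) ls"
proof (cases "length ls = N")
  case True
  let ?W = "\<lambda>l i. psi \<rho> \<omega> p q a b (i + 1) n m \<alpha> \<beta> l"
  let ?D = "lin p ^ i1 * lin q ^ j1 * lin b ^ k1"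
  have "mat N N (\<lambda>(i, j). psi \<rho> \<omega> p q a b (i + 1) (n + int i1) (m + int j1) \<alpha> (\<beta> + int k1) (ls ! j))
     = mat N N (\<lambda>(i,j). (map (ev ?W) (map (\<lambda>l. monom 1 l * ?D) ls) ! j) i)"
  proof (rule eq_matI)
    fix i j assume ij: "i < dim_row (mat N N (\<lambda>(i,j). (map (ev ?W) (map (\<lambda>l. monom 1 l * ?D) ls) ! j) i))"
      "j < dim_col (mat N N (\<lambda>(i,j). (map (ev ?W) (map (\<lambda>l. monom 1 l * ?D) ls) ! j) i))"
    hence i: "i < N" and j: "j < N" by auto
    have nzi: "\<forall>jj\<in>{1..4}. \<omega> jj (i+1) \<noteq> p \<and> \<omega> jj (i+1) \<noteq> q \<and> \<omega> jj (i+1) \<noteq> b"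
      using nz i by auto
    show "mat N N (\<lambda>(i, j). psi \<rho> \<omega> p q a b (i + 1) (n + int i1) (m + int j1) \<alpha> (\<beta> + int k1) (ls ! j)) $$ (i, j) =
        mat N N (\<lambda>(i,j). (map (ev ?W) (map (\<lambda>l. monom 1 l * ?D) ls) ! j) i) $$ (i, j)"
    proof -
      have A: "psi \<rho> \<omega> p q a b (i + 1) (n + int i1) (m + int j1) \<alpha> (\<beta> + int k1) (ls ! j) =
        (\<Sum>jj\<in>{1..4}. \<rho> jj (i+1) * ((p - \<omega> jj (i+1)) powi n * (q - \<omega> jj (i+1)) powi m * (a - \<omega> jj (i+1)) powi \<alpha> * (b - \<omega> jj (i+1)) powi \<beta>)
          * poly (monom 1 (ls ! j) * ?D) (- \<omega> jj (i+1)))"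
        by (rule psi_shift[where \<omega>=\<omega> and s="i+1" and p=p and q=q and b=b, OF nzi])
      have B: "ev ?W (monom 1 (ls ! j) * ?D) i =
        (\<Sum>jj\<in>{1..4}. \<rho> jj (i+1) * ((p - \<omega> jj (i+1)) powi n * (q - \<omega> jj (i+1)) powi m * (a - \<omega> jj (i+1)) powi \<alpha> * (b - \<omega> jj (i+1)) powi \<beta>)
          * poly (monom 1 (ls ! j) * ?D) (- \<omega> jj (i+1)))"
        by (rule ev_W)
      show ?thesis using i j True A B by simp
    qed
  qed auto
  thus ?thesis unfolding casor_def Cas_def Om_def Dv_def using True by simp
next
  case False thus ?thesis unfolding casor_def Cas_def by simp
qed


lemma roots_g:
  assumes roots: "\<forall>s\<in>{1..N}. \<forall>x. G \<alpha>1 \<alpha>2 \<alpha>3 (- x) (- k s) = (\<Prod>j\<in>{1..4}. (x - \<omega> j s))"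
    and s: "s \<in> {1..N}" and j: "j \<in> {1..4::nat}"
  shows "gq \<alpha>1 \<alpha>2 \<alpha>3 (- \<omega> j s) = gq \<alpha>1 \<alpha>2 \<alpha>3 (- k s)"
proof -
  have "G \<alpha>1 \<alpha>2 \<alpha>3 (- \<omega> j s) (- k s) = (\<Prod>jj\<in>{1..4}. (\<omega> j s - \<omega> jj s))"
    using roots s by blast
  also have "\<dots> = 0" using j by (intro prod_zero) auto
  finally show ?thesis unfolding G_gq by simp
qed

definition "Qb \<alpha>1 \<alpha>2 \<alpha>3 b = Qc (\<alpha>3 - b) (b^2 - \<alpha>3*b + \<alpha>2) (\<alpha>1 - \<alpha>2*b + \<alpha>3*b^2 - b^3)"

lemma poly_lbQ: "poly (lin b * Qb \<alpha>1 \<alpha>2 \<alpha>3 b) x = gq \<alpha>1 \<alpha>2 \<alpha>3 x - gq \<alpha>1 \<alpha>2 \<alpha>3 (- b)"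
  unfolding Qb_def Qc_def gq_def by (simp add: algebra_simps power2_eq_square power3_eq_cube eval_nat_numeral)

lemma Cas_shift:
  "Cas N (\<lambda>l i. ev W (R * monom 1 l) i) D ls = Cas N W (R * D) ls"
proof (cases "length ls = N")
  case True
  have "Om N (\<lambda>l. ev W (R * monom 1 l)) (map (\<lambda>l. monom 1 l * D) ls) = Om N W (map (\<lambda>P. R * P) (map (\<lambda>l. monom 1 l * D) ls))"
    by (rule Om_shift) (simp add: True)
  thus ?thesis unfolding Cas_def using True by (simp add: comp_def mult_ac)
next
  case False thus ?thesis unfolding Cas_def by simp
qed

lemma Cas_disp:
  assumes disp: "\<And>i P. i < N \<Longrightarrow> ev W (R * P) i = d i * ev W P i"
  shows "Cas N W (R * D) ls = (\<Prod>i<N. d i) * Cas N W D ls"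
proof (cases "length ls = N")
  case True
  have "Dv N (map (ev W) (map (\<lambda>l. monom 1 l * (R * D)) ls)) = Dv N (map (\<lambda>v i. d i * v i) (map (ev W) (map (\<lambda>l. monom 1 l * D) ls)))"
  proof (rule Dv_cong)
    fix i j assume "i < N" "j < N"
    thus "(map (ev W) (map (\<lambda>l. monom 1 l * (R * D)) ls) ! j) i = (map (\<lambda>v i. d i * v i) (map (ev W) (map (\<lambda>l. monom 1 l * D) ls)) ! j) i"
      using True disp[of i "monom 1 (ls!j) * D"] by (simp add: mult_ac)
  qed
  also have "\<dots> = (\<Prod>i<N. d i) * Dv N (map (ev W) (map (\<lambda>l. monom 1 l * D) ls))"
    by (rule Dv_rowscale) (simp add: True)
  finally show ?thesis unfolding Cas_def Om_def using True by simp
next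
  case False thus ?thesis unfolding Cas_def by simp
qed

theorem theorem4p3:
  fixes \<alpha>1 \<alpha>2 \<alpha>3 p q a b :: complex
    and N :: nat and k :: "nat \<Rightarrow> complex"
    and \<omega> \<rho> :: "nat \<Rightarrow> nat \<Rightarrow> complex"
    and \<alpha> n m \<beta> :: int
  assumes dist: "distinct [p, q, a, b]"
    and N: "N \<ge> 1"
    and roots: "\<forall>s\<in>{1..N}. \<forall>x. G \<alpha>1 \<alpha>2 \<alpha>3 (- x) (- k s) = (\<Prod>j\<in>{1..4}. (x - \<omega> j s))"
    and om4: "\<forall>s\<in>{1..N}. \<omega> 4 s = k s"
    and nz: "\<forall>s\<in>{1..N}. \<forall>j\<in>{1..4}. \<omega> j s \<noteq> p \<and> \<omega> j s \<noteq> q \<and> \<omega> j s \<noteq> a \<and> \<omega> j s \<noteq> b"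
  defines "f \<equiv> \<lambda>n m \<beta>. casor N \<rho> \<omega> p q a b n m \<alpha> \<beta> [0..<N]"
    and "g \<equiv> \<lambda>n m \<beta>. casor N \<rho> \<omega> p q a b n m \<alpha> \<beta> ([0..<N - 1] @ [N])"
    and "h \<equiv> \<lambda>n m \<beta>. casor N \<rho> \<omega> p q a b n m \<alpha> \<beta> ([0..<N - 1] @ [N + 1])"
    and "sc \<equiv> \<lambda>n m \<beta>. casor N \<rho> \<omega> p q a b n m \<alpha> \<beta> ([0..<N - 2] @ [N - 1, N])"
    and "pb \<equiv> G \<alpha>1 \<alpha>2 \<alpha>3 (- p) (- b) / (p - b)"
    and "qb \<equiv> G \<alpha>1 \<alpha>2 \<alpha>3 (- q) (- b) / (q - b)"
  shows
    "f (n+1) m \<beta> * (p * f n m (\<beta>+1) + g n m (\<beta>+1)) - (p - b) * f n m \<beta> * f (n+1) m (\<beta>+1)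
       - (b * f (n+1) m \<beta> + g (n+1) m \<beta>) * f n m (\<beta>+1) = 0
   \<and> f n (m+1) \<beta> * (q * f n m (\<beta>+1) + g n m (\<beta>+1)) - (q - b) * f n m \<beta> * f n (m+1) (\<beta>+1)
       - (b * f n (m+1) \<beta> + g n (m+1) \<beta>) * f n m (\<beta>+1) = 0
   \<and> f (n+1) m \<beta> * (b^2 * f n m (\<beta>+1) - b * g n m (\<beta>+1) + h n m (\<beta>+1))
       + p * f (n+1) m \<beta> * (g n m (\<beta>+1) - b * f n m (\<beta>+1))
       - (p - b) * f n m \<beta> * (g (n+1) m (\<beta>+1) - b * f (n+1) m (\<beta>+1))
       - f n m (\<beta>+1) * h (n+1) m \<beta> = 0
   \<and> f n (m+1) \<beta> * (b^2 * f n m (\<beta>+1) - b * g n m (\<beta>+1) + h n m (\<beta>+1))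
       + q * f n (m+1) \<beta> * (g n m (\<beta>+1) - b * f n m (\<beta>+1))
       - (q - b) * f n m \<beta> * (g n (m+1) (\<beta>+1) - b * f n (m+1) (\<beta>+1))
       - f n m (\<beta>+1) * h n (m+1) \<beta> = 0
   \<and> f (n+1) m \<beta> * (p * g n m \<beta> + h n m \<beta>) - g (n+1) m \<beta> * (p * f n m \<beta> + g n m \<beta>)
       + f n m \<beta> * sc (n+1) m \<beta> = 0
   \<and> f n (m+1) \<beta> * (q * g n m \<beta> + h n m \<beta>) - g n (m+1) \<beta> * (q * f n m \<beta> + g n m \<beta>)
       + f n m \<beta> * sc n (m+1) \<beta> = 0
   \<and> (p - q) * (f (n+1) m \<beta> * f n (m+1) \<beta> - f n m \<beta> * f (n+1) (m+1) \<beta>)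
       + f (n+1) m \<beta> * g n (m+1) \<beta> - f n (m+1) \<beta> * g (n+1) m \<beta> = 0
   \<and> (H \<alpha>2 \<alpha>3 p q * f n m \<beta> * f (n+1) (m+1) (\<beta>+1) + sc n m \<beta> * f (n+1) (m+1) (\<beta>+1)
        + (p + q - \<alpha>3) * g n m \<beta> * f (n+1) (m+1) (\<beta>+1)
        - ((p + q - \<alpha>3) * f n m \<beta> + g n m \<beta>) * (g (n+1) (m+1) (\<beta>+1) - b * f (n+1) (m+1) (\<beta>+1))
        + f n m \<beta> * (h (n+1) (m+1) (\<beta>+1) - b * g (n+1) (m+1) (\<beta>+1) + b^2 * f (n+1) (m+1) (\<beta>+1)))
       * (p - q)
     - pb * f (n+1) m \<beta> * f n (m+1) (\<beta>+1) + qb * f n (m+1) \<beta> * f (n+1) m (\<beta>+1) = 0"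
proof -
  define W where "W = (\<lambda>l i. psi \<rho> \<omega> p q a b (i + 1) n m \<alpha> \<beta> l)"
  have nzr: "\<forall>s\<in>{1..N}. \<forall>j\<in>{1..4}. \<omega> j s \<noteq> p \<and> \<omega> j s \<noteq> q \<and> \<omega> j s \<noteq> b" using nz by blast
  have CC: "\<And>i1 j1 k1 ls. casor N \<rho> \<omega> p q a b (n + int i1) (m + int j1) \<alpha> (\<beta> + int k1) ls = Cas N W (lin p ^ i1 * lin q ^ j1 * lin b ^ k1) ls"
    unfolding W_def by (rule casor_Cas[OF nzr])
  have c000: "\<And>ls. casor N \<rho> \<omega> p q a b n m \<alpha> \<beta> ls = Cas N W 1 ls" using CC[of 0 0 0] by simp
  have c100: "\<And>ls. casor N \<rho> \<omega> p q a b (n+1) m \<alpha> \<beta> ls = Cas N W (lin p) ls" using CC[of 1 0 0] by simp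
  have c010: "\<And>ls. casor N \<rho> \<omega> p q a b n (m+1) \<alpha> \<beta> ls = Cas N W (lin q) ls" using CC[of 0 1 0] by simp
  have c001: "\<And>ls. casor N \<rho> \<omega> p q a b n m \<alpha> (\<beta>+1) ls = Cas N W (lin b) ls" using CC[of 0 0 1] by simp
  have c110: "\<And>ls. casor N \<rho> \<omega> p q a b (n+1) (m+1) \<alpha> \<beta> ls = Cas N W (lin p * lin q) ls" using CC[of 1 1 0] by simp
  have c101: "\<And>ls. casor N \<rho> \<omega> p q a b (n+1) m \<alpha> (\<beta>+1) ls = Cas N W (lin p * lin b) ls" using CC[of 1 0 1] by simp
  have c011: "\<And>ls. casor N \<rho> \<omega> p q a b n (m+1) \<alpha> (\<beta>+1) ls = Cas N W (lin q * lin b) ls" using CC[of 0 1 1] by simp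
  have c111: "\<And>ls. casor N \<rho> \<omega> p q a b (n+1) (m+1) \<alpha> (\<beta>+1) ls = Cas N W (lin p * lin q * lin b) ls" using CC[of 1 1 1] by simp
  note cs = c000 c100 c010 c001 c110 c101 c011 c111
  note shp = fS_def gS_def hS_def sS_def
  have E1: "f (n+1) m \<beta> * (p * f n m (\<beta>+1) + g n m (\<beta>+1)) - (p - b) * f n m \<beta> * f (n+1) m (\<beta>+1)
       - (b * f (n+1) m \<beta> + g (n+1) m \<beta>) * f n m (\<beta>+1) = SQe N W p b"
    unfolding f_def g_def SQe_def shp cs by (simp add: algebra_simps)
  have E2: "f n (m+1) \<beta> * (q * f n m (\<beta>+1) + g n m (\<beta>+1)) - (q - b) * f n m \<beta> * f n (m+1) (\<beta>+1)
       - (b * f n (m+1) \<beta> + g n (m+1) \<beta>) * f n m (\<beta>+1) = SQe N W q b"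
    unfolding f_def g_def SQe_def shp cs by (simp add: algebra_simps)
  have E3: "f (n+1) m \<beta> * (b^2 * f n m (\<beta>+1) - b * g n m (\<beta>+1) + h n m (\<beta>+1))
       + p * f (n+1) m \<beta> * (g n m (\<beta>+1) - b * f n m (\<beta>+1))
       - (p - b) * f n m \<beta> * (g (n+1) m (\<beta>+1) - b * f (n+1) m (\<beta>+1))
       - f n m (\<beta>+1) * h (n+1) m \<beta> = SQHe N W p b"
    unfolding f_def g_def h_def SQHe_def shp cs by (simp add: algebra_simps)
  have E4: "f n (m+1) \<beta> * (b^2 * f n m (\<beta>+1) - b * g n m (\<beta>+1) + h n m (\<beta>+1))
       + q * f n (m+1) \<beta> * (g n m (\<beta>+1) - b * f n m (\<beta>+1))
       - (q - b) * f n m \<beta> * (g n (m+1) (\<beta>+1) - b * f n (m+1) (\<beta>+1))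
       - f n m (\<beta>+1) * h n (m+1) \<beta> = SQHe N W q b"
    unfolding f_def g_def h_def SQHe_def shp cs by (simp add: algebra_simps)
  have E5: "f (n+1) m \<beta> * (p * g n m \<beta> + h n m \<beta>) - g (n+1) m \<beta> * (p * f n m \<beta> + g n m \<beta>)
       + f n m \<beta> * sc (n+1) m \<beta> = LNe N W p"
    unfolding f_def g_def h_def sc_def LNe_def shp cs by (simp add: algebra_simps)
  have E6: "f n (m+1) \<beta> * (q * g n m \<beta> + h n m \<beta>) - g n (m+1) \<beta> * (q * f n m \<beta> + g n m \<beta>)
       + f n m \<beta> * sc n (m+1) \<beta> = LNe N W q"
    unfolding f_def g_def h_def sc_def LNe_def shp cs by (simp add: algebra_simps)
  have E7: "(p - q) * (f (n+1) m \<beta> * f n (m+1) \<beta> - f n m \<beta> * f (n+1) (m+1) \<beta>)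
       + f (n+1) m \<beta> * g n (m+1) \<beta> - f n (m+1) \<beta> * g (n+1) m \<beta> = SQe N W p q"
    unfolding f_def g_def SQe_def shp cs by (simp add: algebra_simps)
  have N1: "1 \<le> N" using N .
  define e1 where "e1 = \<alpha>3 - b"
  define e2 where "e2 = b^2 - \<alpha>3*b + \<alpha>2"
  define e3 where "e3 = \<alpha>1 - \<alpha>2*b + \<alpha>3*b^2 - b^3"
  define Q where "Q = Qc e1 e2 e3"
  have QQb: "Q = Qb \<alpha>1 \<alpha>2 \<alpha>3 b" unfolding Q_def Qb_def e1_def e2_def e3_def ..
  define d where "d = (\<lambda>i. gq \<alpha>1 \<alpha>2 \<alpha>3 (- k (i+1)) - gq \<alpha>1 \<alpha>2 \<alpha>3 (- b))"
  have disp: "\<And>i P. i < N \<Longrightarrow> ev W ((lin b * Q) * P) i = d i * ev W P i"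
  proof -
    fix i P assume i: "i < N"
    have s: "i + 1 \<in> {1..N}" using i by simp
    have pj: "\<And>j. j \<in> {1..4} \<Longrightarrow> poly (lin b * Q) (- \<omega> j (i+1)) = d i"
      unfolding QQb poly_lbQ d_def using roots_g[OF roots s] by simp
    have "ev W ((lin b * Q) * P) i = (\<Sum>j\<in>{1..4}. \<rho> j (i+1) * ((p - \<omega> j (i+1)) powi n * (q - \<omega> j (i+1)) powi m * (a - \<omega> j (i+1)) powi \<alpha> * (b - \<omega> j (i+1)) powi \<beta>)
        * poly ((lin b * Q) * P) (- \<omega> j (i+1)))" unfolding W_def by (rule ev_W)
    also have "\<dots> = (\<Sum>j\<in>{1..4}. d i * (\<rho> j (i+1) * ((p - \<omega> j (i+1)) powi n * (q - \<omega> j (i+1)) powi m * (a - \<omega> j (i+1)) powi \<alpha> * (b - \<omega> j (i+1)) powi \<beta>)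
        * poly P (- \<omega> j (i+1))))"
    proof (rule sum.cong[OF refl])
      fix j assume j: "j \<in> {1..4::nat}"
      have "poly ((lin b * Q) * P) (- \<omega> j (i+1)) = d i * poly P (- \<omega> j (i+1))"
        by (simp only: poly_mult[of "lin b * Q" P] pj[OF j])
      thus "\<rho> j (i+1) * ((p - \<omega> j (i+1)) powi n * (q - \<omega> j (i+1)) powi m * (a - \<omega> j (i+1)) powi \<alpha> * (b - \<omega> j (i+1)) powi \<beta>)
        * poly ((lin b * Q) * P) (- \<omega> j (i+1)) = d i * (\<rho> j (i+1) * ((p - \<omega> j (i+1)) powi n * (q - \<omega> j (i+1)) powi m * (a - \<omega> j (i+1)) powi \<alpha> * (b - \<omega> j (i+1)) powi \<beta>)
        * poly P (- \<omega> j (i+1)))" by simp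
    qed
    also have "\<dots> = d i * ev W P i" unfolding W_def ev_W by (simp add: sum_distrib_left)
    finally show "ev W ((lin b * Q) * P) i = d i * ev W P i" .
  qed
  have dnz: "\<And>i. i < N \<Longrightarrow> d i \<noteq> 0"
  proof -
    fix i assume i: "i < N"
    have s: "i + 1 \<in> {1..N}" using i by simp
    have "G \<alpha>1 \<alpha>2 \<alpha>3 (- b) (- k (i+1)) = (\<Prod>j\<in>{1..4}. (b - \<omega> j (i+1)))" using roots s by blast
    also have "\<dots> \<noteq> 0"
    proof -
      have "\<forall>j\<in>{1..4}. \<omega> j (i+1) \<noteq> b" using nz s by blast
      thus ?thesis by (auto simp: prod_zero_iff)
    qed
    finally show "d i \<noteq> 0" unfolding d_def G_gq by simp
  qed
  define P where "P = (\<Prod>i<N. d i)"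
  have Pnz: "P \<noteq> 0" unfolding P_def using dnz by (simp add: prod_zero_iff)
  define W' where "W' = (\<lambda>l i. ev W (lin b * monom 1 l) i)"
  have sh: "\<And>D ls. Cas N W' D ls = Cas N W (lin b * D) ls" unfolding W'_def by (rule Cas_shift)
  have dp: "\<And>D ls. Cas N W ((lin b * Q) * D) ls = P * Cas N W D ls" unfolding P_def by (rule Cas_disp[OF disp])
  have S000: "\<And>ls. P * Cas N W 1 ls = Cas N W' Q ls"
    using dp[of 1] sh[of Q] by (simp add: mult_ac)
  have S100: "\<And>ls. P * Cas N W (lin p) ls = Cas N W' (lin p * Q) ls"
    using dp[of "lin p"] sh[of "lin p * Q"] by (simp add: mult_ac)
  have S010: "\<And>ls. P * Cas N W (lin q) ls = Cas N W' (lin q * Q) ls"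
    using dp[of "lin q"] sh[of "lin q * Q"] by (simp add: mult_ac)
  have S111: "\<And>ls. Cas N W (lin p * lin q * lin b) ls = Cas N W' (DD p q) ls"
    using sh[of "DD p q"] by (simp add: DD_def mult_ac)
  have S011: "\<And>ls. Cas N W (lin q * lin b) ls = Cas N W' (lin q) ls"
    using sh[of "lin q"] by (simp add: mult_ac)
  have S101: "\<And>ls. Cas N W (lin p * lin b) ls = Cas N W' (lin p) ls"
    using sh[of "lin p"] by (simp add: mult_ac)
  have pbQ: "pb = - Qm e1 e2 e3 p"
  proof -
    have "G \<alpha>1 \<alpha>2 \<alpha>3 (- p) (- b) = poly (lin b * Q) (- p)" unfolding G_gq QQb poly_lbQ ..
    also have "\<dots> = (b - p) * poly Q (- p)" by simp
    finally have Geq: "G \<alpha>1 \<alpha>2 \<alpha>3 (- p) (- b) = (b - p) * poly Q (- p)" .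
    have h: "pb = (b - p) * poly Q (- p) / (p - b)" unfolding pb_def Geq ..
    have ne: "p - b \<noteq> 0" using dist by auto
    have "pb * (p - b) = (b - p) * poly Q (- p)" using h ne by simp
    hence "(pb + poly Q (- p)) * (p - b) = 0" by (simp add: algebra_simps)
    hence "pb + poly Q (- p) = 0" using ne by simp
    thus ?thesis unfolding Qm_def Q_def by (simp add: eq_neg_iff_add_eq_0)
  qed
  have qbQ: "qb = - Qm e1 e2 e3 q"
  proof -
    have "G \<alpha>1 \<alpha>2 \<alpha>3 (- q) (- b) = poly (lin b * Q) (- q)" unfolding G_gq QQb poly_lbQ ..
    also have "\<dots> = (b - q) * poly Q (- q)" by simp
    finally have Geq: "G \<alpha>1 \<alpha>2 \<alpha>3 (- q) (- b) = (b - q) * poly Q (- q)" .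
    have h: "qb = (b - q) * poly Q (- q) / (q - b)" unfolding qb_def Geq ..
    have ne: "q - b \<noteq> 0" using dist by auto
    have "qb * (q - b) = (b - q) * poly Q (- q)" using h ne by simp
    hence "(qb + poly Q (- q)) * (q - b) = 0" by (simp add: algebra_simps)
    hence "qb + poly Q (- q) = 0" using ne by simp
    thus ?thesis unfolding Qm_def Q_def by (simp add: eq_neg_iff_add_eq_0)
  qed
  let ?L8 = "(H \<alpha>2 \<alpha>3 p q * f n m \<beta> * f (n+1) (m+1) (\<beta>+1) + sc n m \<beta> * f (n+1) (m+1) (\<beta>+1)
        + (p + q - \<alpha>3) * g n m \<beta> * f (n+1) (m+1) (\<beta>+1)
        - ((p + q - \<alpha>3) * f n m \<beta> + g n m \<beta>) * (g (n+1) (m+1) (\<beta>+1) - b * f (n+1) (m+1) (\<beta>+1))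
        + f n m \<beta> * (h (n+1) (m+1) (\<beta>+1) - b * g (n+1) (m+1) (\<beta>+1) + b^2 * f (n+1) (m+1) (\<beta>+1)))
       * (p - q)
     - pb * f (n+1) m \<beta> * f n (m+1) (\<beta>+1) + qb * f n (m+1) \<beta> * f (n+1) m (\<beta>+1)"
  have "P * ?L8 = C4e N W' p q e1 e2 e3"
  proof -
    let ?F = "Cas N W' (DD p q) (fS N)" and ?G = "Cas N W' (DD p q) (gS N)" and ?Hh = "Cas N W' (DD p q) (hS N)"
    have "P * ?L8 = (H \<alpha>2 \<alpha>3 p q * (P * Cas N W 1 (fS N)) * ?F + (P * Cas N W 1 (sS N)) * ?F
        + (p + q - \<alpha>3) * (P * Cas N W 1 (gS N)) * ?F
        - ((p + q - \<alpha>3) * (P * Cas N W 1 (fS N)) + (P * Cas N W 1 (gS N))) * (?G - b * ?F)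
        + (P * Cas N W 1 (fS N)) * (?Hh - b * ?G + b^2 * ?F)) * (p - q)
       - pb * (P * Cas N W (lin p) (fS N)) * Cas N W' (lin q) (fS N) + qb * (P * Cas N W (lin q) (fS N)) * Cas N W' (lin p) (fS N)"
      unfolding f_def g_def h_def sc_def shp cs S111 S011 S101 by (simp add: algebra_simps)
    also have "\<dots> = C4e N W' p q e1 e2 e3"
      unfolding S000 S100 S010 C4e_def pbQ qbQ Q_def H_def e1_def e2_def e3_def
      by (simp add: algebra_simps power2_eq_square)
    finally show ?thesis .
  qed
  also have "\<dots> = 0" by (rule C4e_all[OF N1])
  finally have E8: "?L8 = 0" using Pnz by simp
  show ?thesis
    using E1 E2 E3 E4 E5 E6 E7 E8 SQe_all[OF N1] SQHe_all[OF N1] LNe_all[OF N1] by simp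
qed


end
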